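(* Let $0\le\rho<1$, $0<\delta<1$, integers $n>0$, $m>1$, and let $\psi_{AB}$ be an $m$-dimensional noisy maximally entangled state with maximal correlation $\rho=\rho(\psi_{AB})$. Then there exist $d=d(\rho,\delta)$ and a map $f:\mathcal{H}_m^{\otimes n}\to\mathcal{H}_m^{\otimes n}$ such that for all $P,Q\in\mathcal{H}_m^{\otimes n}$ with $0\le P\le\mathrm{id}$ and $0\le Q\le\mathrm{id}$, the operators $P^{(1)}=f(P)$, $Q^{(1)}=f(Q)$ satisfy: (1) $0\le P^{(1)}\le\mathrm{id}$ and $0\le Q^{(1)}\le\mathrm{id}$; (2) $\|P^{(1)}\|'_2\le\|P\|'_2$ and $\|Q^{(1)}\|'_2\le\|Q\|'_2$; (3) $|\mathrm{Tr}((P^{(1)}\otimes Q^{(1)})\psi_{AB}^{\otimes n})-\mathrm{Tr}((P\otimes Q)\psi_{AB}^{\otimes n})|\le\delta$; (4) $\|(P^{(1)})^{>d}\|'^2_2\le\delta$ and $\|(Q^{(1)})^{>d}\|'^2_2\le\delta$; (5) $f$ is linear and unital. In particular one can take $d=\frac{2\log^2(1/\delta)}{C(1-\rho)\delta}$ for some constant $C$.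
   Context: For $X\in\mathcal{M}_m^{\otimes n}$ (complex operators on $(\mathbb{C}^m)^{\otimes n}$), $\|X\|'_2=(\frac1{m^n}\mathrm{Tr}X^\dagger X)^{1/2}$. A standard orthonormal basis of $\mathcal{M}_m$ is an orthonormal basis (w.r.t. $\frac1m\mathrm{Tr}X^\dagger Y$) of Hermitian matrices $\mathcal{B}_0=\mathrm{id}_m,\ldots,\mathcal{B}_{m^2-1}$; for $\sigma\in\{0,\ldots,m^2-1\}^n$, $\mathcal{B}_\sigma=\bigotimes_i\mathcal{B}_{\sigma_i}$, $|\sigma|=|\{i:\sigma_i\ne0\}|$, and $X=\sum_\sigma\widehat X(\sigma)\mathcal{B}_\sigma$. Then $X^{>d}=\sum_{|\sigma|>d}\widehat X(\sigma)\mathcal{B}_\sigma$, which is independent of the basis. A noisy maximally entangled state is a state $\psi_{AB}$ on $\mathbb{C}^m\otimes\mathbb{C}^m$ with $\psi_A=\psi_B=\mathrm{id}_m/m$ and maximal correlation $\rho(\psi_{AB})=\sup\{|\mathrm{Tr}((P^\dagger\otimes Q)\psi_{AB})|:\mathrm{Tr}P=\mathrm{Tr}Q=0,\ \tfrac1m\mathrm{Tr}P^\dagger P=\tfrac1m\mathrm{Tr}Q^\dagger Q=1\}<1$. *)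

theory Defs
  imports Complex_Main
begin

text \<open>Operators on (C^m)^{\<otimes> n} are represented as functions
  nat list \<Rightarrow> nat list \<Rightarrow> complex, where a basis index is a list of length n
  with entries below m; entries outside this index set are required to be 0.
  Operators on C^m \<otimes> C^m are functions (nat \<times> nat) \<Rightarrow> (nat \<times> nat) \<Rightarrow> complex.\<close>

definition idx :: "nat \<Rightarrow> nat \<Rightarrow> nat list set" where
  "idx m n = {xs. length xs = n \<and> (\<forall>x\<in>set xs. x < m)}"

definition ext_on :: "'a set \<Rightarrow> ('a \<Rightarrow> 'a \<Rightarrow> complex) \<Rightarrow> bool" where
  "ext_on S X \<longleftrightarrow> (\<forall>i j. (i \<notin> S \<or> j \<notin> S) \<longrightarrow> X i j = 0)"

definition herm_on :: "'a set \<Rightarrow> ('a \<Rightarrow> 'a \<Rightarrow> complex) \<Rightarrow> bool" where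
  "herm_on S X \<longleftrightarrow> ext_on S X \<and> (\<forall>i\<in>S. \<forall>j\<in>S. X i j = cnj (X j i))"

definition psd_on :: "'a set \<Rightarrow> ('a \<Rightarrow> 'a \<Rightarrow> complex) \<Rightarrow> bool" where
  "psd_on S X \<longleftrightarrow> herm_on S X \<and>
     (\<forall>v :: 'a \<Rightarrow> complex. 0 \<le> Re (\<Sum>i\<in>S. \<Sum>j\<in>S. cnj (v i) * X i j * v j))"

definition id_on :: "'a set \<Rightarrow> 'a \<Rightarrow> 'a \<Rightarrow> complex" where
  "id_on S i j = (if i = j \<and> i \<in> S then 1 else 0)"

definition between01 :: "'a set \<Rightarrow> ('a \<Rightarrow> 'a \<Rightarrow> complex) \<Rightarrow> bool" where
  "between01 S P \<longleftrightarrow> psd_on S P \<and> psd_on S (\<lambda>i j. id_on S i j - P i j)"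

definition norm2' :: "nat \<Rightarrow> nat \<Rightarrow> (nat list \<Rightarrow> nat list \<Rightarrow> complex) \<Rightarrow> real" where
  "norm2' m n X = sqrt ((1 / real m ^ n) * (\<Sum>i\<in>idx m n. \<Sum>j\<in>idx m n. (cmod (X i j))\<^sup>2))"

text \<open>Tr((P \<otimes> Q) \<psi>^{\<otimes> n}), with the A-systems grouped together and the B-systems grouped together.\<close>
definition corr :: "nat \<Rightarrow> nat \<Rightarrow> ((nat \<times> nat) \<Rightarrow> (nat \<times> nat) \<Rightarrow> complex)
    \<Rightarrow> (nat list \<Rightarrow> nat list \<Rightarrow> complex) \<Rightarrow> (nat list \<Rightarrow> nat list \<Rightarrow> complex) \<Rightarrow> complex" where
  "corr m n \<psi> P Q = (\<Sum>a\<in>idx m n. \<Sum>a'\<in>idx m n. \<Sum>b\<in>idx m n. \<Sum>b'\<in>idx m n.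
      P a a' * Q b b' * (\<Prod>k<n. \<psi> (a' ! k, b' ! k) (a ! k, b ! k)))"

definition pair_idx :: "nat \<Rightarrow> (nat \<times> nat) set" where
  "pair_idx m = {..<m} \<times> {..<m}"

definition ptrace_A :: "nat \<Rightarrow> ((nat \<times> nat) \<Rightarrow> (nat \<times> nat) \<Rightarrow> complex) \<Rightarrow> nat \<Rightarrow> nat \<Rightarrow> complex" where
  "ptrace_A m \<psi> a a' = (\<Sum>b<m. \<psi> (a, b) (a', b))"

definition ptrace_B :: "nat \<Rightarrow> ((nat \<times> nat) \<Rightarrow> (nat \<times> nat) \<Rightarrow> complex) \<Rightarrow> nat \<Rightarrow> nat \<Rightarrow> complex" where
  "ptrace_B m \<psi> b b' = (\<Sum>a<m. \<psi> (a, b) (a, b'))"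

text \<open>|Tr((P^\<dagger> \<otimes> Q) \<psi>)|\<close>
definition corr1 :: "nat \<Rightarrow> ((nat \<times> nat) \<Rightarrow> (nat \<times> nat) \<Rightarrow> complex)
    \<Rightarrow> (nat \<Rightarrow> nat \<Rightarrow> complex) \<Rightarrow> (nat \<Rightarrow> nat \<Rightarrow> complex) \<Rightarrow> complex" where
  "corr1 m \<psi> P Q = (\<Sum>a<m. \<Sum>a'<m. \<Sum>b<m. \<Sum>b'<m.
      cnj (P a' a) * Q b b' * \<psi> (a', b') (a, b))"

definition maxcorr :: "nat \<Rightarrow> ((nat \<times> nat) \<Rightarrow> (nat \<times> nat) \<Rightarrow> complex) \<Rightarrow> real" where
  "maxcorr m \<psi> = Sup {cmod (corr1 m \<psi> P Q) | P Q.
      ext_on {..<m} P \<and> ext_on {..<m} Q \<and>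
      (\<Sum>i<m. P i i) = 0 \<and> (\<Sum>i<m. Q i i) = 0 \<and>
      (1 / real m) * (\<Sum>i<m. \<Sum>j<m. (cmod (P i j))\<^sup>2) = 1 \<and>
      (1 / real m) * (\<Sum>i<m. \<Sum>j<m. (cmod (Q i j))\<^sup>2) = 1}"

definition nme_state :: "nat \<Rightarrow> ((nat \<times> nat) \<Rightarrow> (nat \<times> nat) \<Rightarrow> complex) \<Rightarrow> bool" where
  "nme_state m \<psi> \<longleftrightarrow> psd_on (pair_idx m) \<psi> \<and>
     (\<Sum>x\<in>pair_idx m. \<psi> x x) = 1 \<and>
     (\<forall>a<m. \<forall>a'<m. ptrace_A m \<psi> a a' = id_on {..<m} a a' / of_nat m) \<and>
     (\<forall>b<m. \<forall>b'<m. ptrace_B m \<psi> b b' = id_on {..<m} b b' / of_nat m) \<and>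
     maxcorr m \<psi> < 1"

definition std_onb :: "nat \<Rightarrow> (nat \<Rightarrow> nat \<Rightarrow> nat \<Rightarrow> complex) \<Rightarrow> bool" where
  "std_onb m B \<longleftrightarrow> B 0 = id_on {..<m} \<and>
     (\<forall>k<m\<^sup>2. herm_on {..<m} (B k)) \<and>
     (\<forall>k<m\<^sup>2. \<forall>l<m\<^sup>2. (1 / of_nat m) * (\<Sum>i<m. \<Sum>j<m. cnj (B k i j) * B l i j)
                         = (if k = l then 1 else 0))"

definition basis_tensor :: "nat \<Rightarrow> (nat \<Rightarrow> nat \<Rightarrow> nat \<Rightarrow> complex) \<Rightarrow> nat list
    \<Rightarrow> nat list \<Rightarrow> nat list \<Rightarrow> complex" where
  "basis_tensor n B \<sigma> i j = (\<Prod>k<n. B (\<sigma> ! k) (i ! k) (j ! k))"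

definition weight :: "nat list \<Rightarrow> nat" where
  "weight \<sigma> = length (filter (\<lambda>s. s \<noteq> 0) \<sigma>)"

definition fcoeff :: "nat \<Rightarrow> nat \<Rightarrow> (nat \<Rightarrow> nat \<Rightarrow> nat \<Rightarrow> complex)
    \<Rightarrow> (nat list \<Rightarrow> nat list \<Rightarrow> complex) \<Rightarrow> nat list \<Rightarrow> complex" where
  "fcoeff m n B X \<sigma> = (1 / of_nat m ^ n) *
     (\<Sum>i\<in>idx m n. \<Sum>j\<in>idx m n. cnj (basis_tensor n B \<sigma> i j) * X i j)"

definition high_part :: "nat \<Rightarrow> nat \<Rightarrow> (nat \<Rightarrow> nat \<Rightarrow> nat \<Rightarrow> complex) \<Rightarrow> real
    \<Rightarrow> (nat list \<Rightarrow> nat list \<Rightarrow> complex) \<Rightarrow> nat list \<Rightarrow> nat list \<Rightarrow> complex" where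
  "high_part m n B d X i j =
     (\<Sum>\<sigma>\<in>{\<sigma>\<in>idx (m\<^sup>2) n. real (weight \<sigma>) > d}. fcoeff m n B X \<sigma> * basis_tensor n B \<sigma> i j)"

definition linear_unital :: "nat \<Rightarrow> nat \<Rightarrow>
    ((nat list \<Rightarrow> nat list \<Rightarrow> complex) \<Rightarrow> (nat list \<Rightarrow> nat list \<Rightarrow> complex)) \<Rightarrow> bool" where
  "linear_unital m n f \<longleftrightarrow>
     (\<forall>X. herm_on (idx m n) X \<longrightarrow> herm_on (idx m n) (f X)) \<and>
     (\<forall>X Y (a::real) (b::real). herm_on (idx m n) X \<longrightarrow> herm_on (idx m n) Y \<longrightarrow>
        f (\<lambda>i j. of_real a * X i j + of_real b * Y i j)
          = (\<lambda>i j. of_real a * f X i j + of_real b * f Y i j)) \<and>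
     f (id_on (idx m n)) = id_on (idx m n)"

end

theory Submission
  imports Defs
begin


type_synonym op = "nat list \<Rightarrow> nat list \<Rightarrow> complex"

lemma cs_sum:
  fixes a b :: "'a \<Rightarrow> real"
  shows "(\<Sum>i\<in>I. a i * b i)\<^sup>2 \<le> (\<Sum>i\<in>I. (a i)\<^sup>2) * (\<Sum>i\<in>I. (b i)\<^sup>2)"
proof (cases "(\<Sum>i\<in>I. (b i)\<^sup>2) > 0")
  case False
  then consider "\<And>i. i\<in>I \<Longrightarrow> b i = 0" | "infinite I"
    by (metis (mono_tags, lifting) sum_pos2 zero_le_power2 zero_less_power2)
  thus ?thesis
    by fastforce
next
  case True
  define r where "r \<equiv> (\<Sum>i\<in>I. a i * b i) / (\<Sum>i\<in>I. (b i)\<^sup>2)"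
  have "0 \<le> (\<Sum>i\<in>I. (a i - r * b i)\<^sup>2)"
    by (simp add: sum_nonneg)
  also have "... = (\<Sum>i\<in>I. (a i)\<^sup>2) - 2 * r * (\<Sum>i\<in>I. a i * b i) + r\<^sup>2 * (\<Sum>i\<in>I. (b i)\<^sup>2)"
    by (simp add: algebra_simps power2_eq_square sum_distrib_left flip: sum.distrib)
  also have "\<dots> = (\<Sum>i\<in>I. (a i)\<^sup>2) - ((\<Sum>i\<in>I. a i * b i))\<^sup>2 / (\<Sum>i\<in>I. (b i)\<^sup>2)"
    by (simp add: r_def power2_eq_square)
  finally have "0 \<le> (\<Sum>i\<in>I. (a i)\<^sup>2) - ((\<Sum>i\<in>I. a i * b i))\<^sup>2 / (\<Sum>i\<in>I. (b i)\<^sup>2)" .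
  hence "((\<Sum>i\<in>I. a i * b i))\<^sup>2 / (\<Sum>i\<in>I. (b i)\<^sup>2) \<le> (\<Sum>i\<in>I. (a i)\<^sup>2)"
    by linarith
  thus ?thesis using True by (simp add: divide_le_eq)
qed

lemma cs_sqrt:
  fixes a b :: "'a \<Rightarrow> real"
  shows "(\<Sum>i\<in>I. a i * b i) \<le> sqrt (\<Sum>i\<in>I. (a i)\<^sup>2) * sqrt (\<Sum>i\<in>I. (b i)\<^sup>2)"
proof -
  have "\<bar>\<Sum>i\<in>I. a i * b i\<bar> \<le> sqrt ((\<Sum>i\<in>I. (a i)\<^sup>2) * (\<Sum>i\<in>I. (b i)\<^sup>2))"
    using cs_sum[of a b I] by (simp add: real_le_rsqrt)
  thus ?thesis by (simp add: real_sqrt_mult)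
qed

lemma cs_sqrt_nn:
  fixes a b :: "'a \<Rightarrow> real"
  assumes "\<And>i. i \<in> I \<Longrightarrow> 0 \<le> a i" "\<And>i. i \<in> I \<Longrightarrow> 0 \<le> b i"
  shows "(\<Sum>i\<in>I. sqrt (a i) * sqrt (b i)) \<le> sqrt (\<Sum>i\<in>I. a i) * sqrt (\<Sum>i\<in>I. b i)"
proof -
  have "(\<Sum>i\<in>I. sqrt (a i) * sqrt (b i)) \<le> sqrt (\<Sum>i\<in>I. (sqrt (a i))\<^sup>2) * sqrt (\<Sum>i\<in>I. (sqrt (b i))\<^sup>2)"
    by (rule cs_sqrt)
  also have "\<dots> = sqrt (\<Sum>i\<in>I. a i) * sqrt (\<Sum>i\<in>I. b i)"
    using assms by (simp cong: sum.cong)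
  finally show ?thesis .
qed

lemma sqrt2_ineq:
  fixes a b c d :: real
  assumes "0 \<le> a" "0 \<le> b" "0 \<le> c" "0 \<le> d"
  shows "sqrt a * sqrt b + sqrt c * sqrt d \<le> sqrt (a + c) * sqrt (b + d)"
  using cs_sqrt_nn[of "{True, False}" "\<lambda>x. if x then a else c" "\<lambda>x. if x then b else d"] assms
  by simp

lemma idx_0: "idx m 0 = {[]}" by (auto simp: idx_def)

lemma idx_Suc: "idx m (Suc n) = (\<lambda>(a,xs). a#xs) ` ({..<m} \<times> idx m n)"
  by (auto simp: idx_def image_iff length_Suc_conv)

lemma finite_idx[simp]: "finite (idx m n)"
  by (induction n) (auto simp: idx_0 idx_Suc)

lemma sum_idx_Suc: "(\<Sum>i\<in>idx m (Suc n). g i) = (\<Sum>a<m. \<Sum>xs\<in>idx m n. g (a#xs))"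
  unfolding idx_Suc
  by (subst sum.reindex) (auto simp: inj_on_def sum.cartesian_product split_beta)

lemma card_idx: "card (idx m n) = m ^ n"
  by (induction n) (auto simp: idx_0 idx_Suc card_image inj_on_def card_cartesian_product)

lemma idx_Cons[simp]: "(a # xs \<in> idx m (Suc n)) = (a < m \<and> xs \<in> idx m n)"
  by (auto simp: idx_def)

lemma idx_length: "i \<in> idx m n \<Longrightarrow> length i = n" by (simp add: idx_def)
lemma idx_nth: "i \<in> idx m n \<Longrightarrow> k < n \<Longrightarrow> i ! k < m" by (simp add: idx_def)

lemma sum_idx_prod:
  fixes f :: "nat \<Rightarrow> nat \<Rightarrow> 'a::comm_semiring_1"
  shows "(\<Sum>i\<in>idx m n. \<Prod>k<n. f k (i ! k)) = (\<Prod>k<n. \<Sum>u<m. f k u)"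
proof (induction n arbitrary: f)
  case 0
  then show ?case by (simp add: idx_0)
next
  case (Suc n)
  have "(\<Sum>i\<in>idx m (Suc n). \<Prod>k<Suc n. f k (i ! k))
      = (\<Sum>a<m. \<Sum>xs\<in>idx m n. f 0 a * (\<Prod>k<n. f (Suc k) (xs ! k)))"
    by (simp only: sum_idx_Suc prod.lessThan_Suc_shift nth_Cons_0 nth_Cons_Suc)
  also have "\<dots> = (\<Sum>a<m. f 0 a) * (\<Sum>xs\<in>idx m n. (\<Prod>k<n. f (Suc k) (xs ! k)))"
    by (rule sum_product[symmetric])
  also have "\<dots> = (\<Sum>a<m. f 0 a) * (\<Prod>k<n. \<Sum>u<m. f (Suc k) u)"
    using Suc[of "\<lambda>k. f (Suc k)"] by simp
  also have "\<dots> = (\<Prod>k<Suc n. \<Sum>u<m. f k u)"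
    by (simp only: prod.lessThan_Suc_shift)
  finally show ?case .
qed

lemma sum_idx_prod2:
  fixes g :: "nat \<Rightarrow> nat \<Rightarrow> nat \<Rightarrow> 'a::comm_semiring_1"
  shows "(\<Sum>i\<in>idx m n. \<Sum>j\<in>idx m n. \<Prod>k<n. g k (i ! k) (j ! k)) = (\<Prod>k<n. \<Sum>u<m. \<Sum>v<m. g k u v)"
proof -
  have "(\<Sum>i\<in>idx m n. \<Sum>j\<in>idx m n. \<Prod>k<n. g k (i ! k) (j ! k))
      = (\<Sum>i\<in>idx m n. \<Prod>k<n. \<Sum>v<m. g k (i ! k) v)"
    by (intro sum.cong refl) (rule sum_idx_prod)
  also have "\<dots> = (\<Prod>k<n. \<Sum>u<m. \<Sum>v<m. g k u v)"
    by (rule sum_idx_prod)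
  finally show ?thesis .
qed



definition blk :: "op \<Rightarrow> nat \<Rightarrow> nat \<Rightarrow> op" where
  "blk X a a' = (\<lambda>xs ys. X (a#xs) (a'#ys))"
definition tr1 :: "nat \<Rightarrow> op \<Rightarrow> op" where
  "tr1 m X = (\<lambda>xs ys. \<Sum>u<m. X (u#xs) (u#ys))"
definition NN :: "nat \<Rightarrow> nat \<Rightarrow> op \<Rightarrow> real" where
  "NN m n X = (\<Sum>i\<in>idx m n. \<Sum>j\<in>idx m n. (cmod (X i j))\<^sup>2)"
definition psip :: "nat \<Rightarrow> ((nat\<times>nat)\<Rightarrow>(nat\<times>nat)\<Rightarrow>complex) \<Rightarrow> (nat\<times>nat)\<Rightarrow>(nat\<times>nat)\<Rightarrow>complex" where
  "psip m \<psi> x y = \<psi> x y - (if x = y then 1 / (of_nat m)\<^sup>2 else 0)"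

fun Phi :: "nat \<Rightarrow> ((nat\<times>nat)\<Rightarrow>(nat\<times>nat)\<Rightarrow>complex) \<Rightarrow> nat \<Rightarrow> (nat \<Rightarrow> real) \<Rightarrow> op \<Rightarrow> op \<Rightarrow> complex" where
  "Phi m \<psi> 0 h X Y = complex_of_real (h 0) * X [] [] * Y [] []"
| "Phi m \<psi> (Suc n) h X Y = Phi m \<psi> n h (tr1 m X) (tr1 m Y) / (of_nat m)\<^sup>2 +
     (\<Sum>a<m. \<Sum>a'<m. \<Sum>b<m. \<Sum>b'<m. psip m \<psi> (a',b') (a,b) *
        Phi m \<psi> n (\<lambda>k. h (Suc k)) (blk X a a') (blk Y b b'))"

definition bil :: "(op \<Rightarrow> op \<Rightarrow> complex) \<Rightarrow> bool" where
  "bil \<beta> \<longleftrightarrow> (\<forall>X X' Y c. \<beta> (\<lambda>i j. c * X i j + X' i j) Y = c * \<beta> X Y + \<beta> X' Y) \<and>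
              (\<forall>X Y Y' c. \<beta> X (\<lambda>i j. c * Y i j + Y' i j) = c * \<beta> X Y + \<beta> X Y')"

lemma bil_L: "bil \<beta> \<Longrightarrow> \<beta> (\<lambda>i j. c * X i j + X' i j) Y = c * \<beta> X Y + \<beta> X' Y"
  by (simp add: bil_def)
lemma bil_R: "bil \<beta> \<Longrightarrow> \<beta> X (\<lambda>i j. c * Y i j + Y' i j) = c * \<beta> X Y + \<beta> X Y'"
  by (simp add: bil_def)

lemma bil_addL: "bil \<beta> \<Longrightarrow> \<beta> (\<lambda>i j. X i j + X' i j) Y = \<beta> X Y + \<beta> X' Y"
  using bil_L[of \<beta> 1 X X' Y] by simp
lemma bil_addR: "bil \<beta> \<Longrightarrow> \<beta> X (\<lambda>i j. Y i j + Y' i j) = \<beta> X Y + \<beta> X Y'"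
  using bil_R[of \<beta> X 1 Y Y'] by simp
lemma bil_0L: "bil \<beta> \<Longrightarrow> \<beta> (\<lambda>i j. 0) Y = 0"
  using bil_L[of \<beta> "-1" "\<lambda>i j. 0" "\<lambda>i j. 0" Y] by simp
lemma bil_0R: "bil \<beta> \<Longrightarrow> \<beta> X (\<lambda>i j. 0) = 0"
  using bil_R[of \<beta> X "-1" "\<lambda>i j. 0" "\<lambda>i j. 0"] by simp
lemma bil_smulL: "bil \<beta> \<Longrightarrow> \<beta> (\<lambda>i j. c * X i j) Y = c * \<beta> X Y"
  using bil_L[of \<beta> c X "\<lambda>i j. 0" Y] bil_0L[of \<beta> Y] by simp
lemma bil_smulR: "bil \<beta> \<Longrightarrow> \<beta> X (\<lambda>i j. c * Y i j) = c * \<beta> X Y"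
  using bil_R[of \<beta> X c Y "\<lambda>i j. 0"] bil_0R[of \<beta> X] by simp

lemma bil_sumL:
  assumes "bil \<beta>" "finite U"
  shows "\<beta> (\<lambda>i j. \<Sum>u\<in>U. F u i j) Y = (\<Sum>u\<in>U. \<beta> (F u) Y)"
  using assms(2)
proof (induction U rule: finite_induct)
  case empty then show ?case using bil_0L[OF assms(1)] by simp
next
  case (insert x F')
  then show ?case using bil_addL[OF assms(1), of "F x" "\<lambda>i j. \<Sum>u\<in>F'. F u i j" Y] by simp
qed

lemma bil_sumR:
  assumes "bil \<beta>" "finite U"
  shows "\<beta> X (\<lambda>i j. \<Sum>u\<in>U. F u i j) = (\<Sum>u\<in>U. \<beta> X (F u))"
  using assms(2)
proof (induction U rule: finite_induct)
  case empty then show ?case using bil_0R[OF assms(1)] by simp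
next
  case (insert x F')
  then show ?case using bil_addR[OF assms(1), of X "F x" "\<lambda>i j. \<Sum>u\<in>F'. F u i j"] by simp
qed

lemma tr1_lin: "tr1 m (\<lambda>i j. c * X i j + X' i j) = (\<lambda>i j. c * tr1 m X i j + tr1 m X' i j)"
  by (simp add: tr1_def sum.distrib sum_distrib_left)
lemma blk_lin: "blk (\<lambda>i j. c * X i j + X' i j) a a' = (\<lambda>i j. c * blk X a a' i j + blk X' a a' i j)"
  by (simp add: blk_def)

lemma Phi_L: "Phi m \<psi> n h (\<lambda>i j. c * X i j + X' i j) Y = c * Phi m \<psi> n h X Y + Phi m \<psi> n h X' Y"
proof (induction n arbitrary: h X X' Y)
  case 0 then show ?case by (simp add: algebra_simps)
next
  case (Suc n)
  show ?case
    by (simp only: Phi.simps tr1_lin blk_lin Suc)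
       (simp add: algebra_simps sum.distrib sum_distrib_left add_divide_distrib)
qed

lemma Phi_R: "Phi m \<psi> n h X (\<lambda>i j. c * Y i j + Y' i j) = c * Phi m \<psi> n h X Y + Phi m \<psi> n h X Y'"
proof (induction n arbitrary: h X Y Y')
  case 0 then show ?case by (simp add: algebra_simps)
next
  case (Suc n)
  show ?case
    by (simp only: Phi.simps tr1_lin blk_lin Suc)
       (simp add: algebra_simps sum.distrib sum_distrib_left add_divide_distrib)
qed

lemma bil_Phi: "bil (Phi m \<psi> n h)"
  by (simp add: bil_def Phi_L Phi_R)

lemma Phi_h: "Phi m \<psi> n (\<lambda>k. c * h1 k + h2 k) X Y = of_real c * Phi m \<psi> n h1 X Y + Phi m \<psi> n h2 X Y"
proof (induction n arbitrary: h1 h2 X Y)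
  case 0 then show ?case by (simp add: algebra_simps)
next
  case (Suc n)
  show ?case
    by (simp only: Phi.simps Suc)
       (simp add: algebra_simps sum.distrib sum_distrib_left add_divide_distrib)
qed

lemma bil_corr: "bil (corr m n \<psi>)"
  unfolding bil_def corr_def
  by (simp add: algebra_simps sum.distrib sum_distrib_left)

lemma corr_Suc:
  "corr m (Suc n) \<psi> X Y = (\<Sum>a<m. \<Sum>a'<m. \<Sum>b<m. \<Sum>b'<m. \<psi> (a',b') (a,b) *
      corr m n \<psi> (blk X a a') (blk Y b b'))"
  unfolding corr_def blk_def
  by (simp only: sum_idx_Suc prod.lessThan_Suc_shift nth_Cons_0 nth_Cons_Suc)
     (simp add: sum_distrib_left sum.swap[of _ "idx m n" "{..<m}"] ac_simps)

definition margs :: "nat \<Rightarrow> ((nat\<times>nat)\<Rightarrow>(nat\<times>nat)\<Rightarrow>complex) \<Rightarrow> bool" where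
  "margs m \<psi> \<longleftrightarrow> (\<forall>a<m. \<forall>a'<m. ptrace_A m \<psi> a a' = id_on {..<m} a a' / of_nat m) \<and>
     (\<forall>b<m. \<forall>b'<m. ptrace_B m \<psi> b b' = id_on {..<m} b b' / of_nat m)"

lemma killA:
  assumes "margs m \<psi>" "b < m" "b' < m" "0 < m"
  shows "(\<Sum>a<m. psip m \<psi> (a,b') (a,b)) = 0"
proof -
  have "(\<Sum>a<m. \<psi> (a,b') (a,b)) = id_on {..<m} b' b / of_nat m"
    using assms(1-3) unfolding margs_def ptrace_B_def by auto
  then show ?thesis using assms(2-4)
    by (simp add: psip_def sum_subtractf id_on_def power2_eq_square)
qed

lemma killB:
  assumes "margs m \<psi>" "a < m" "a' < m" "0 < m"
  shows "(\<Sum>b<m. psip m \<psi> (a',b) (a,b)) = 0"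
proof -
  have "(\<Sum>b<m. \<psi> (a',b) (a,b)) = id_on {..<m} a' a / of_nat m"
    using assms(1-3) unfolding margs_def ptrace_A_def by auto
  then show ?thesis using assms(2-4)
    by (simp add: psip_def sum_subtractf id_on_def power2_eq_square)
qed

lemma sum_rot3:
  "(\<Sum>a\<in>A. \<Sum>b\<in>B. \<Sum>c\<in>C. f a b c) = (\<Sum>b\<in>B. \<Sum>c\<in>C. \<Sum>a\<in>A. f a b c)"
  by (subst sum.swap) (rule sum.cong[OF refl], rule sum.swap)

lemma sum_delta_lt:
  "a < (m::nat) \<Longrightarrow> (\<Sum>a'<m. if a' = a then f a' else 0) = f a"
  "a < (m::nat) \<Longrightarrow> (\<Sum>a'<m. if a = a' then f a' else 0) = f a"
  by (simp_all add: sum.delta sum.delta')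

lemma ifz: "(if P then c else 0) * z = (if P then c * z else (0::'a::mult_zero))"
  by simp
lemma ifz2: "z * (if P then c else 0) = (if P then z * c else (0::'a::mult_zero))"
  by simp
lemma sum_if_const: "(\<Sum>x\<in>A. if P then f x else 0) = (if P then (\<Sum>x\<in>A. f x) else 0)"
  by simp

lemma split_pi:
  assumes "bil \<beta>"
  shows "(\<Sum>a<m. \<Sum>a'<m. \<Sum>b<m. \<Sum>b'<m. \<psi> (a',b') (a,b) * \<beta> (F a a') (G b b'))
    = \<beta> (\<lambda>i j. \<Sum>a<m. F a a i j) (\<lambda>i j. \<Sum>b<m. G b b i j) / (of_nat m)\<^sup>2 +
      (\<Sum>a<m. \<Sum>a'<m. \<Sum>b<m. \<Sum>b'<m. psip m \<psi> (a',b') (a,b) * \<beta> (F a a') (G b b'))"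
proof -
  have e: "\<psi> (a',b') (a,b) = psip m \<psi> (a',b') (a,b) + (if a' = a then (if b' = b then 1 / (of_nat m)\<^sup>2 else 0) else 0)"
    for a a' b b' by (simp add: psip_def)
  have "(\<Sum>a<m. \<Sum>a'<m. \<Sum>b<m. \<Sum>b'<m. (if a' = a then (if b' = b then 1 / (of_nat m)\<^sup>2 else 0) else 0) * \<beta> (F a a') (G b b'))
      = (\<Sum>a<m. \<Sum>b<m. 1 / (of_nat m)\<^sup>2 * \<beta> (F a a) (G b b))"
    by (simp only: ifz sum_if_const sum.delta finite_lessThan) (auto simp: field_simps intro!: sum.cong)
  also have "\<dots> = (\<Sum>a<m. \<Sum>b<m. \<beta> (F a a) (G b b)) / (of_nat m)\<^sup>2"
    by (simp add: sum_divide_distrib)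
  also have "(\<Sum>a<m. \<Sum>b<m. \<beta> (F a a) (G b b)) = \<beta> (\<lambda>i j. \<Sum>a<m. F a a i j) (\<lambda>i j. \<Sum>b<m. G b b i j)"
    by (simp add: bil_sumL[OF assms] bil_sumR[OF assms])
  finally show ?thesis
    by (simp only: e distrib_right sum.distrib) simp
qed

lemma kill:
  assumes "bil \<beta>" "margs m \<psi>" "0 < m"
  shows "(\<Sum>a<m. \<Sum>a'<m. \<Sum>b<m. \<Sum>b'<m. psip m \<psi> (a',b') (a,b) *
      \<beta> (\<lambda>i j. F a a' i j + (if a = a' then A i j else 0)) (\<lambda>i j. G b b' i j + (if b = b' then B i j else 0)))
    = (\<Sum>a<m. \<Sum>a'<m. \<Sum>b<m. \<Sum>b'<m. psip m \<psi> (a',b') (a,b) * \<beta> (F a a') (G b b'))"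
proof -
  have T: "\<beta> (\<lambda>i j. F a a' i j + (if a = a' then A i j else 0)) (\<lambda>i j. G b b' i j + (if b = b' then B i j else 0))
     = \<beta> (F a a') (G b b') + (if a = a' then \<beta> A (G b b') else 0) + (if b = b' then \<beta> (F a a') B else 0)
       + (if a = a' then (if b = b' then \<beta> A B else 0) else 0)" for a a' b b'
    using bil_addL[OF assms(1)] bil_addR[OF assms(1)] by (cases "a = a'"; cases "b = b'") simp_all
  have z1: "(\<Sum>a<m. \<Sum>a'<m. \<Sum>b<m. \<Sum>b'<m. psip m \<psi> (a',b') (a,b) * (if a = a' then \<beta> A (G b b') else 0)) = 0"
  proof -
    have "(\<Sum>a<m. \<Sum>a'<m. \<Sum>b<m. \<Sum>b'<m. psip m \<psi> (a',b') (a,b) * (if a = a' then \<beta> A (G b b') else 0))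
        = (\<Sum>a<m. \<Sum>a'<m. if a = a' then (\<Sum>b<m. \<Sum>b'<m. psip m \<psi> (a',b') (a,b) * \<beta> A (G b b')) else 0)"
      by (intro sum.cong refl) auto
    also have "\<dots> = (\<Sum>a<m. \<Sum>b<m. \<Sum>b'<m. psip m \<psi> (a,b') (a,b) * \<beta> A (G b b'))"
      by (simp only: ifz ifz2 sum_if_const sum.delta sum.delta' finite_lessThan) (auto intro!: sum.cong)
    also have "\<dots> = (\<Sum>b<m. \<Sum>b'<m. \<Sum>a<m. psip m \<psi> (a,b') (a,b) * \<beta> A (G b b'))"
      by (rule sum_rot3)
    also have "\<dots> = (\<Sum>b<m. \<Sum>b'<m. (\<Sum>a<m. psip m \<psi> (a,b') (a,b)) * \<beta> A (G b b'))"
      by (simp only: sum_distrib_right)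
    also have "\<dots> = 0" using killA[OF assms(2) _ _ assms(3)] by simp
    finally show ?thesis .
  qed
  have z2: "(\<Sum>a<m. \<Sum>a'<m. \<Sum>b<m. \<Sum>b'<m. psip m \<psi> (a',b') (a,b) * (if b = b' then \<beta> (F a a') B else 0)) = 0"
  proof -
    have "(\<Sum>a<m. \<Sum>a'<m. \<Sum>b<m. \<Sum>b'<m. psip m \<psi> (a',b') (a,b) * (if b = b' then \<beta> (F a a') B else 0))
        = (\<Sum>a<m. \<Sum>a'<m. \<Sum>b<m. \<Sum>b'<m. if b = b' then psip m \<psi> (a',b') (a,b) * \<beta> (F a a') B else 0)"
      by (intro sum.cong refl) auto
    also have "\<dots> = (\<Sum>a<m. \<Sum>a'<m. \<Sum>b<m. psip m \<psi> (a',b) (a,b) * \<beta> (F a a') B)"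
      by (simp only: ifz ifz2 sum_if_const sum.delta sum.delta' finite_lessThan) (auto intro!: sum.cong)
    also have "\<dots> = (\<Sum>a<m. \<Sum>a'<m. (\<Sum>b<m. psip m \<psi> (a',b) (a,b)) * \<beta> (F a a') B)"
      by (simp only: sum_distrib_right)
    also have "\<dots> = 0" using killB[OF assms(2) _ _ assms(3)] by simp
    finally show ?thesis .
  qed
  have z3: "(\<Sum>a<m. \<Sum>a'<m. \<Sum>b<m. \<Sum>b'<m. psip m \<psi> (a',b') (a,b) * (if a = a' then (if b = b' then \<beta> A B else 0) else 0)) = 0"
  proof -
    have "(\<Sum>a<m. \<Sum>a'<m. \<Sum>b<m. \<Sum>b'<m. psip m \<psi> (a',b') (a,b) * (if a = a' then (if b = b' then \<beta> A B else 0) else 0))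
        = (\<Sum>a<m. \<Sum>b<m. psip m \<psi> (a,b) (a,b) * \<beta> A B)"
      by (simp only: ifz ifz2 sum_if_const sum.delta sum.delta' finite_lessThan) (auto intro!: sum.cong)
    also have "\<dots> = (\<Sum>b<m. \<Sum>a<m. psip m \<psi> (a,b) (a,b) * \<beta> A B)"
      by (rule sum.swap)
    also have "\<dots> = (\<Sum>b<m. (\<Sum>a<m. psip m \<psi> (a,b) (a,b)) * \<beta> A B)"
      by (simp only: sum_distrib_right)
    also have "\<dots> = 0" using killA[OF assms(2) _ _ assms(3)] by simp
    finally show ?thesis .
  qed
  show ?thesis
    by (simp only: T distrib_left sum.distrib z1 z2 z3) simp
qed

lemma tr1_blk: "tr1 m X = (\<lambda>i j. \<Sum>a<m. blk X a a i j)"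
  by (simp add: tr1_def blk_def)

lemma corr_Phi1: "corr m n \<psi> X Y = Phi m \<psi> n (\<lambda>_. 1) X Y"
proof (induction n arbitrary: X Y)
  case 0 then show ?case by (simp add: corr_def idx_0)
next
  case (Suc n)
  have "corr m (Suc n) \<psi> X Y = (\<Sum>a<m. \<Sum>a'<m. \<Sum>b<m. \<Sum>b'<m. \<psi> (a',b') (a,b) *
      Phi m \<psi> n (\<lambda>_. 1) (blk X a a') (blk Y b b'))"
    by (simp only: corr_Suc Suc)
  also have "\<dots> = Phi m \<psi> n (\<lambda>_. 1) (\<lambda>i j. \<Sum>a<m. blk X a a i j) (\<lambda>i j. \<Sum>b<m. blk Y b b i j) / (of_nat m)\<^sup>2 +
      (\<Sum>a<m. \<Sum>a'<m. \<Sum>b<m. \<Sum>b'<m. psip m \<psi> (a',b') (a,b) * Phi m \<psi> n (\<lambda>_. 1) (blk X a a') (blk Y b b'))"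
    by (rule split_pi[OF bil_Phi])
  also have "\<dots> = Phi m \<psi> (Suc n) (\<lambda>_. 1) X Y"
    by (simp only: Phi.simps tr1_blk)
  finally show ?case .
qed



definition N1 :: "nat \<Rightarrow> (nat \<Rightarrow> nat \<Rightarrow> complex) \<Rightarrow> real" where
  "N1 m u = (\<Sum>a<m. \<Sum>a'<m. (cmod (u a a'))\<^sup>2)"

definition sbound :: "nat \<Rightarrow> ((nat\<times>nat)\<Rightarrow>(nat\<times>nat)\<Rightarrow>complex) \<Rightarrow> real \<Rightarrow> bool" where
  "sbound m \<psi> \<rho> \<longleftrightarrow> (\<forall>u w. (\<Sum>a<m. u a a) = 0 \<longrightarrow> (\<Sum>b<m. w b b) = 0 \<longrightarrow>
     cmod (\<Sum>a<m. \<Sum>a'<m. \<Sum>b<m. \<Sum>b'<m. psip m \<psi> (a',b') (a,b) * u a a' * w b b')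
       \<le> \<rho> / m * sqrt (N1 m u) * sqrt (N1 m w))"

lemma cmod_sq_cnj: "complex_of_real ((cmod z)\<^sup>2) = z * cnj z"
  by (subst complex_mult_cnj) (simp only: cmod_power2)

lemma opnorm:
  assumes fin: "finite P" "finite Q" and C: "0 \<le> C"
    and bnd: "\<And>s t. cmod (\<Sum>p\<in>P. \<Sum>q\<in>Q. M p q * s p * t q)
        \<le> C * sqrt (\<Sum>p\<in>P. (cmod (s p))\<^sup>2) * sqrt (\<Sum>q\<in>Q. (cmod (t q))\<^sup>2)"
  shows "(\<Sum>p\<in>P. (cmod (\<Sum>q\<in>Q. M p q * t q))\<^sup>2) \<le> C\<^sup>2 * (\<Sum>q\<in>Q. (cmod (t q))\<^sup>2)"
proof -
  define r where "r p = (\<Sum>q\<in>Q. M p q * t q)" for p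
  define R where "R = (\<Sum>p\<in>P. (cmod (r p))\<^sup>2)"
  define T where "T = (\<Sum>q\<in>Q. (cmod (t q))\<^sup>2)"
  have R0: "0 \<le> R" unfolding R_def by (simp add: sum_nonneg)
  have T0: "0 \<le> T" unfolding T_def by (simp add: sum_nonneg)
  have c: "(\<Sum>q\<in>Q. M p q * c * t q) = c * (\<Sum>q\<in>Q. M p q * t q)" for p c
    by (simp add: sum_distrib_left ac_simps)
  have "(\<Sum>p\<in>P. \<Sum>q\<in>Q. M p q * cnj (r p) * t q) = (\<Sum>p\<in>P. cnj (r p) * r p)"
    by (simp only: c r_def[symmetric])
  also have "\<dots> = complex_of_real R"
    unfolding R_def of_real_sum cmod_sq_cnj by (simp only: mult.commute)
  finally have e: "(\<Sum>p\<in>P. \<Sum>q\<in>Q. M p q * cnj (r p) * t q) = complex_of_real R" .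
  have "R \<le> C * sqrt (\<Sum>p\<in>P. (cmod (cnj (r p)))\<^sup>2) * sqrt T"
    using bnd[of "\<lambda>p. cnj (r p)" t] unfolding e T_def using R0 by simp
  hence Rb: "R \<le> C * sqrt R * sqrt T" unfolding R_def by simp
  show ?thesis
  proof (cases "R = 0")
    case True then show ?thesis using C T0 unfolding R_def r_def T_def by simp
  next
    case False
    hence sR: "0 < sqrt R" using R0 by simp
    have "sqrt R * sqrt R \<le> C * sqrt T * sqrt R" using Rb R0 by (simp add: ac_simps)
    hence "sqrt R \<le> C * sqrt T" using sR by (meson mult_right_le_imp_le)
    hence "(sqrt R)\<^sup>2 \<le> (C * sqrt T)\<^sup>2" using sR by (intro power_mono) auto
    thus ?thesis using R0 T0 unfolding R_def[symmetric] T_def[symmetric] r_def[symmetric]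
      by (simp add: power_mult_distrib)
  qed
qed

lemma cmod_diff_sq: "(cmod (z - w))\<^sup>2 = (cmod z)\<^sup>2 - 2 * Re (z * cnj w) + (cmod w)\<^sup>2"
  by (simp only: cmod_power2) (simp add: power2_eq_square algebra_simps)

lemma scalar_decomp:
  assumes "0 < m"
  shows "(\<Sum>a<m. \<Sum>a'<m. (cmod (u a a'))\<^sup>2) = (cmod (\<Sum>a<m. u a a))\<^sup>2 / m +
     (\<Sum>a<m. \<Sum>a'<m. (cmod (u a a' - (if a = a' then (\<Sum>c<m. u c c) / of_nat m else 0)))\<^sup>2)"
proof -
  define t where "t = (\<Sum>c<m. u c c)"
  have "(\<Sum>a<m. \<Sum>a'<m. (cmod (u a a' - (if a = a' then t / of_nat m else 0)))\<^sup>2)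
      = (\<Sum>a<m. \<Sum>a'<m. (cmod (u a a'))\<^sup>2 - (if a = a' then 2 * Re (u a a * cnj t) / m - (cmod t)\<^sup>2 / m\<^sup>2 else 0))"
    using assms by (intro sum.cong refl) (auto simp: cmod_diff_sq norm_divide power_divide field_simps)
  also have "\<dots> = (\<Sum>a<m. \<Sum>a'<m. (cmod (u a a'))\<^sup>2) - (\<Sum>a<m. 2 * Re (u a a * cnj t) / m - (cmod t)\<^sup>2 / m\<^sup>2)"
    by (simp add: sum_subtractf sum.If_cases)
  also have "(\<Sum>a<m. 2 * Re (u a a * cnj t) / m - (cmod t)\<^sup>2 / m\<^sup>2) = 2 * Re (t * cnj t) / m - m * (cmod t)\<^sup>2 / m\<^sup>2"
  proof -
    have "(\<Sum>a<m. 2 * Re (u a a * cnj t) / m) = 2 * Re ((\<Sum>a<m. u a a) * cnj t) / m"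
      by (simp only: sum_distrib_right Re_sum sum_divide_distrib[symmetric] sum_distrib_left[symmetric])
    thus ?thesis unfolding t_def by (simp add: sum_subtractf)
  qed
  also have "\<dots> = (cmod t)\<^sup>2 / m"
    using assms by (simp add: complex_norm_square[symmetric] power2_eq_square field_simps del: complex_norm_square)
  finally show ?thesis unfolding t_def by simp
qed


definition Xpp :: "nat \<Rightarrow> op \<Rightarrow> nat \<Rightarrow> nat \<Rightarrow> op" where
  "Xpp m X a a' = (\<lambda>i j. blk X a a' i j - (if a = a' then tr1 m X i j / of_nat m else 0))"

lemma NN_nonneg: "0 \<le> NN m n X" unfolding NN_def by (simp add: sum_nonneg)

lemma NN_decomp:
  assumes "0 < m"
  shows "NN m (Suc n) X = NN m n (tr1 m X) / m + (\<Sum>a<m. \<Sum>a'<m. NN m n (Xpp m X a a'))"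
proof -
  have "NN m (Suc n) X = (\<Sum>xs\<in>idx m n. \<Sum>ys\<in>idx m n. \<Sum>a<m. \<Sum>a'<m. (cmod (X (a#xs) (a'#ys)))\<^sup>2)"
    unfolding NN_def by (simp add: sum_idx_Suc sum.swap[of _ "{..<m}" "idx m n"])
  also have "\<dots> = (\<Sum>xs\<in>idx m n. \<Sum>ys\<in>idx m n. (cmod (\<Sum>a<m. X (a#xs) (a#ys)))\<^sup>2 / m +
     (\<Sum>a<m. \<Sum>a'<m. (cmod (X (a#xs) (a'#ys) - (if a = a' then (\<Sum>c<m. X (c#xs) (c#ys)) / of_nat m else 0)))\<^sup>2))"
    by (intro sum.cong refl) (rule scalar_decomp[OF assms])
  also have "\<dots> = NN m n (tr1 m X) / m + (\<Sum>a<m. \<Sum>a'<m. NN m n (Xpp m X a a'))"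
    unfolding NN_def Xpp_def blk_def tr1_def
    by (simp add: sum.distrib sum_divide_distrib sum.swap[of _ "{..<m}" "idx m n"])
  finally show ?thesis .
qed

definition rs :: "nat \<Rightarrow> nat \<Rightarrow> op \<Rightarrow> op" where
  "rs m n X = (\<lambda>i j. if i \<in> idx m n \<and> j \<in> idx m n then X i j else 0)"
definition ee :: "nat list \<times> nat list \<Rightarrow> op" where
  "ee p = (\<lambda>i j. if (i,j) = p then 1 else 0)"

lemma rs_expand: "rs m n X = (\<lambda>i j. \<Sum>p\<in>idx m n \<times> idx m n. X (fst p) (snd p) * ee p i j)"
proof (intro ext)
  fix i j
  have "(\<Sum>p\<in>idx m n \<times> idx m n. X (fst p) (snd p) * ee p i j)
      = (\<Sum>p\<in>idx m n \<times> idx m n. if p = (i,j) then X (fst p) (snd p) else 0)"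
    unfolding ee_def by (intro sum.cong refl) auto
  also have "\<dots> = rs m n X i j"
    by (subst sum.delta) (auto simp: rs_def)
  finally show "rs m n X i j = (\<Sum>p\<in>idx m n \<times> idx m n. X (fst p) (snd p) * ee p i j)" by simp
qed

lemma tr1_rs: "tr1 m (rs m (Suc n) X) = rs m n (tr1 m X)"
  unfolding tr1_def rs_def by (auto intro!: ext sum.cong)

lemma blk_rs: "a < m \<Longrightarrow> a' < m \<Longrightarrow> blk (rs m (Suc n) X) a a' = rs m n (blk X a a')"
  unfolding blk_def rs_def by (auto intro!: ext)

lemma Phi_rs: "Phi m \<psi> n h (rs m n X) (rs m n Y) = Phi m \<psi> n h X Y"
proof (induction n arbitrary: h X Y)
  case 0 then show ?case by (simp add: rs_def idx_0)
next
  case (Suc n)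
  have "(\<Sum>a<m. \<Sum>a'<m. \<Sum>b<m. \<Sum>b'<m. psip m \<psi> (a',b') (a,b) *
        Phi m \<psi> n (\<lambda>k. h (Suc k)) (blk (rs m (Suc n) X) a a') (blk (rs m (Suc n) Y) b b'))
     = (\<Sum>a<m. \<Sum>a'<m. \<Sum>b<m. \<Sum>b'<m. psip m \<psi> (a',b') (a,b) *
        Phi m \<psi> n (\<lambda>k. h (Suc k)) (blk X a a') (blk Y b b'))"
    by (intro sum.cong refl) (simp add: blk_rs Suc)
  then show ?case by (simp add: tr1_rs Suc)
qed

lemma Phi_expand:
  "Phi m \<psi> n h X Y = (\<Sum>p\<in>idx m n \<times> idx m n. \<Sum>q\<in>idx m n \<times> idx m n.
      X (fst p) (snd p) * Y (fst q) (snd q) * Phi m \<psi> n h (ee p) (ee q))"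
proof -
  have "Phi m \<psi> n h X Y = Phi m \<psi> n h (rs m n X) (rs m n Y)" by (simp add: Phi_rs)
  also have "\<dots> = (\<Sum>p\<in>idx m n \<times> idx m n. \<Sum>q\<in>idx m n \<times> idx m n.
      X (fst p) (snd p) * (Y (fst q) (snd q) * Phi m \<psi> n h (ee p) (ee q)))"
    unfolding rs_expand
    by (simp add: bil_sumL[OF bil_Phi] bil_sumR[OF bil_Phi] bil_smulL[OF bil_Phi] bil_smulR[OF bil_Phi]
        sum_distrib_left)
  finally show ?thesis by (simp add: ac_simps)
qed

lemma NN_pair: "NN m n X = (\<Sum>p\<in>idx m n \<times> idx m n. (cmod (X (fst p) (snd p)))\<^sup>2)"
  unfolding NN_def by (simp add: sum.cartesian_product split_beta)


lemma tensor:
  fixes \<alpha> :: "op \<Rightarrow> op \<Rightarrow> complex"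
  assumes sb: "sbound m \<psi> \<rho>" and r0: "0 \<le> \<rho>" and m: "0 < m" and C: "0 \<le> C"
    and ex: "\<And>X Y. \<alpha> X Y = (\<Sum>p\<in>idx m n \<times> idx m n. \<Sum>q\<in>idx m n \<times> idx m n.
        X (fst p) (snd p) * Y (fst q) (snd q) * \<alpha> (ee p) (ee q))"
    and bd: "\<And>X Y. cmod (\<alpha> X Y) \<le> C * sqrt (NN m n X) * sqrt (NN m n Y)"
    and trU: "\<And>i j. (\<Sum>a<m. U a a i j) = 0" and trV: "\<And>i j. (\<Sum>b<m. V b b i j) = 0"
  shows "cmod (\<Sum>a<m. \<Sum>a'<m. \<Sum>b<m. \<Sum>b'<m. psip m \<psi> (a',b') (a,b) * \<alpha> (U a a') (V b b'))
    \<le> \<rho> / m * C * sqrt (\<Sum>a<m. \<Sum>a'<m. NN m n (U a a')) * sqrt (\<Sum>b<m. \<Sum>b'<m. NN m n (V b b'))"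
proof -
  define P where "P = idx m n \<times> idx m n"
  have finP: "finite P" unfolding P_def by simp
  define M where "M p q = \<alpha> (ee p) (ee q)" for p q
  define W where "W b b' p = (\<Sum>q\<in>P. M p q * V b b' (fst q) (snd q))" for b b' p
  have Mb: "cmod (\<Sum>p\<in>P. \<Sum>q\<in>P. M p q * s p * t q)
      \<le> C * sqrt (\<Sum>p\<in>P. (cmod (s p))\<^sup>2) * sqrt (\<Sum>q\<in>P. (cmod (t q))\<^sup>2)" for s t
  proof -
    have "\<alpha> (\<lambda>i j. s (i,j)) (\<lambda>i j. t (i,j)) = (\<Sum>p\<in>P. \<Sum>q\<in>P. M p q * s p * t q)"
      unfolding ex[of "\<lambda>i j. s (i,j)"] P_def M_def by (simp add: ac_simps)
    moreover have "NN m n (\<lambda>i j. s (i,j)) = (\<Sum>p\<in>P. (cmod (s p))\<^sup>2)"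
      "NN m n (\<lambda>i j. t (i,j)) = (\<Sum>p\<in>P. (cmod (t p))\<^sup>2)"
      unfolding NN_pair P_def by simp_all
    ultimately show ?thesis using bd[of "\<lambda>i j. s (i,j)" "\<lambda>i j. t (i,j)"] by simp
  qed
  have A1: "\<alpha> (U a a') (V b b') = (\<Sum>p\<in>P. U a a' (fst p) (snd p) * W b b' p)" for a a' b b'
    unfolding ex[of "U a a'"] W_def P_def M_def by (simp add: sum_distrib_left ac_simps)
  have A: "(\<Sum>a<m. \<Sum>a'<m. \<Sum>b<m. \<Sum>b'<m. psip m \<psi> (a',b') (a,b) * \<alpha> (U a a') (V b b'))
      = (\<Sum>p\<in>P. \<Sum>a<m. \<Sum>a'<m. \<Sum>b<m. \<Sum>b'<m. psip m \<psi> (a',b') (a,b) * U a a' (fst p) (snd p) * W b b' p)"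
    unfolding A1 by (simp add: sum_distrib_left sum.swap[of _ "{..<m}" P] ac_simps)
  have trW: "(\<Sum>b<m. W b b p) = 0" for p
  proof -
    have "(\<Sum>b<m. W b b p) = (\<Sum>q\<in>P. M p q * (\<Sum>b<m. V b b (fst q) (snd q)))"
      unfolding W_def by (simp add: sum_distrib_left sum.swap[of _ "{..<m}" P])
    thus ?thesis using trV by simp
  qed
  define NU where "NU p = N1 m (\<lambda>a a'. U a a' (fst p) (snd p))" for p
  define NW where "NW p = N1 m (\<lambda>b b'. W b b' p)" for p
  have B: "cmod (\<Sum>a<m. \<Sum>a'<m. \<Sum>b<m. \<Sum>b'<m. psip m \<psi> (a',b') (a,b) * U a a' (fst p) (snd p) * W b b' p)
      \<le> \<rho> / m * sqrt (NU p) * sqrt (NW p)" for p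
    using sb[unfolded sbound_def, rule_format, of "\<lambda>a a'. U a a' (fst p) (snd p)" "\<lambda>b b'. W b b' p"] trU trW
    unfolding NU_def NW_def by simp
  have NU0: "0 \<le> NU p" "0 \<le> NW p" for p unfolding NU_def NW_def N1_def by (simp_all add: sum_nonneg)
  have "cmod (\<Sum>a<m. \<Sum>a'<m. \<Sum>b<m. \<Sum>b'<m. psip m \<psi> (a',b') (a,b) * \<alpha> (U a a') (V b b'))
      \<le> (\<Sum>p\<in>P. \<rho> / m * sqrt (NU p) * sqrt (NW p))"
    unfolding A by (rule order_trans[OF norm_sum sum_mono[OF B]])
  also have "\<dots> = \<rho> / m * (\<Sum>p\<in>P. sqrt (NU p) * sqrt (NW p))"
    by (simp add: sum_distrib_left ac_simps)
  also have "\<dots> \<le> \<rho> / m * (sqrt (\<Sum>p\<in>P. NU p) * sqrt (\<Sum>p\<in>P. NW p))"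
    using r0 m by (intro mult_left_mono cs_sqrt_nn) (auto simp: NU0)
  also have "(\<Sum>p\<in>P. NU p) = (\<Sum>a<m. \<Sum>a'<m. NN m n (U a a'))"
    unfolding NU_def N1_def NN_pair P_def[symmetric] by (simp add: sum.swap[of _ P "{..<m}"])
  also have "(\<Sum>p\<in>P. NW p) \<le> C\<^sup>2 * (\<Sum>b<m. \<Sum>b'<m. NN m n (V b b'))"
  proof -
    have "(\<Sum>p\<in>P. NW p) = (\<Sum>b<m. \<Sum>b'<m. \<Sum>p\<in>P. (cmod (\<Sum>q\<in>P. M p q * V b b' (fst q) (snd q)))\<^sup>2)"
      unfolding NW_def N1_def W_def by (simp add: sum.swap[of _ P "{..<m}"])
    also have "\<dots> \<le> (\<Sum>b<m. \<Sum>b'<m. C\<^sup>2 * (\<Sum>q\<in>P. (cmod (V b b' (fst q) (snd q)))\<^sup>2))"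
      by (intro sum_mono opnorm[OF finP finP C Mb])
    also have "\<dots> = C\<^sup>2 * (\<Sum>b<m. \<Sum>b'<m. NN m n (V b b'))"
      unfolding NN_pair P_def by (simp add: sum_distrib_left)
    finally show ?thesis .
  qed
  hence "sqrt (\<Sum>p\<in>P. NW p) \<le> C * sqrt (\<Sum>b<m. \<Sum>b'<m. NN m n (V b b'))"
    using C by (metis real_sqrt_le_mono real_sqrt_mult real_sqrt_pow2 real_sqrt_power abs_of_nonneg real_sqrt_abs)
  hence "\<rho> / m * (sqrt (\<Sum>a<m. \<Sum>a'<m. NN m n (U a a')) * sqrt (\<Sum>p\<in>P. NW p))
      \<le> \<rho> / m * (sqrt (\<Sum>a<m. \<Sum>a'<m. NN m n (U a a')) * (C * sqrt (\<Sum>b<m. \<Sum>b'<m. NN m n (V b b'))))"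
    using r0 m by (intro mult_left_mono) (auto simp: sum_nonneg NN_nonneg)
  finally show ?thesis by (simp add: ac_simps)
qed


lemma blk_Xpp: "blk X a a' = (\<lambda>i j. Xpp m X a a' i j + (if a = a' then tr1 m X i j / of_nat m else 0))"
  by (simp add: Xpp_def)

lemma tr_Xpp: "0 < m \<Longrightarrow> (\<Sum>a<m. Xpp m X a a i j) = 0"
  by (simp add: Xpp_def sum_subtractf tr1_def blk_def)

lemma Phi_bound:
  assumes sb: "sbound m \<psi> \<rho>" and r0: "0 \<le> \<rho>" and m: "0 < m" and mg: "margs m \<psi>"
  shows "(\<forall>k. \<bar>h k\<bar> * \<rho> ^ k \<le> c) \<Longrightarrow>
     cmod (Phi m \<psi> n h X Y) \<le> c * sqrt (NN m n X) * sqrt (NN m n Y) / real m ^ n"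
proof (induction n arbitrary: h c X Y)
  case 0
  have c: "\<bar>h 0\<bar> \<le> c" using 0[rule_format, of 0] by simp
  have "cmod (Phi m \<psi> 0 h X Y) = \<bar>h 0\<bar> * (cmod (X [] []) * cmod (Y [] []))"
    by (simp add: norm_mult)
  also have "\<dots> \<le> c * (cmod (X [] []) * cmod (Y [] []))"
    using c by (intro mult_right_mono) auto
  finally show ?case by (simp add: NN_def idx_0)
next
  case (Suc n)
  note hyp = Suc.prems
  have c0: "0 \<le> c" using hyp[rule_format, of 0] by simp
  define c' where "c' = (if \<rho> = 0 then \<bar>h 1\<bar> else c / \<rho>)"
  have hc': "\<forall>k. \<bar>h (Suc k)\<bar> * \<rho> ^ k \<le> c'"
  proof
    fix k
    show "\<bar>h (Suc k)\<bar> * \<rho> ^ k \<le> c'"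
    proof (cases "\<rho> = 0")
      case True then show ?thesis by (cases k) (auto simp: c'_def)
    next
      case False
      hence rp: "0 < \<rho>" using r0 by simp
      have "\<bar>h (Suc k)\<bar> * \<rho> ^ k * \<rho> \<le> c" using hyp[rule_format, of "Suc k"] by (simp add: ac_simps)
      thus ?thesis using rp False by (simp add: c'_def pos_le_divide_eq)
    qed
  qed
  have c'0: "0 \<le> c'" using hc'[rule_format, of 0] by simp
  have rc: "\<rho> * c' \<le> c" using c0 by (cases "\<rho> = 0") (auto simp: c'_def)
  have mp: "0 < real m" using m by simp
  define SX where "SX = (\<Sum>a<m. \<Sum>a'<m. NN m n (Xpp m X a a'))"
  define SY where "SY = (\<Sum>b<m. \<Sum>b'<m. NN m n (Xpp m Y b b'))"
  define tX where "tX = NN m n (tr1 m X)"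
  define tY where "tY = NN m n (tr1 m Y)"
  have nn: "0 \<le> SX" "0 \<le> SY" "0 \<le> tX" "0 \<le> tY"
    unfolding SX_def SY_def tX_def tY_def by (simp_all add: sum_nonneg NN_nonneg)
  have T2e: "(\<Sum>a<m. \<Sum>a'<m. \<Sum>b<m. \<Sum>b'<m. psip m \<psi> (a',b') (a,b) *
        Phi m \<psi> n (\<lambda>k. h (Suc k)) (blk X a a') (blk Y b b'))
      = (\<Sum>a<m. \<Sum>a'<m. \<Sum>b<m. \<Sum>b'<m. psip m \<psi> (a',b') (a,b) *
        Phi m \<psi> n (\<lambda>k. h (Suc k)) (Xpp m X a a') (Xpp m Y b b'))"
    by (subst (1 2) blk_Xpp[where m = m]) (rule kill[OF bil_Phi mg m])
  have IH2: "cmod (Phi m \<psi> n (\<lambda>k. h (Suc k)) X' Y') \<le> c' / real m ^ n * sqrt (NN m n X') * sqrt (NN m n Y')" for X' Y'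
    using Suc.IH[OF hc', of X' Y'] by simp
  have T2: "cmod (\<Sum>a<m. \<Sum>a'<m. \<Sum>b<m. \<Sum>b'<m. psip m \<psi> (a',b') (a,b) *
        Phi m \<psi> n (\<lambda>k. h (Suc k)) (blk X a a') (blk Y b b'))
      \<le> \<rho> / m * (c' / real m ^ n) * sqrt SX * sqrt SY"
    unfolding T2e SX_def SY_def
    by (rule tensor[where \<alpha>="Phi m \<psi> n (\<lambda>k. h (Suc k))" and C="c' / real m ^ n" and n=n
          and U="Xpp m X" and V="Xpp m Y"])
       (use sb r0 m c'0 IH2 tr_Xpp[OF m] in \<open>auto intro: Phi_expand\<close>)
  have T2': "\<rho> / m * (c' / real m ^ n) * sqrt SX * sqrt SY \<le> c / real m ^ Suc n * (sqrt SX * sqrt SY)"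
  proof -
    have "\<rho> / m * (c' / real m ^ n) * sqrt SX * sqrt SY = (\<rho> * c') / real m ^ Suc n * (sqrt SX * sqrt SY)"
      by (simp add: field_simps)
    also have "\<dots> \<le> c / real m ^ Suc n * (sqrt SX * sqrt SY)"
      using rc nn mp by (intro mult_right_mono divide_right_mono) auto
    finally show ?thesis .
  qed
  have T1: "cmod (Phi m \<psi> n h (tr1 m X) (tr1 m Y) / (of_nat m)\<^sup>2) \<le> c / real m ^ Suc n * (sqrt (tX / m) * sqrt (tY / m))"
  proof -
    have "cmod (Phi m \<psi> n h (tr1 m X) (tr1 m Y) / (of_nat m)\<^sup>2) = cmod (Phi m \<psi> n h (tr1 m X) (tr1 m Y)) / m\<^sup>2"
      by (simp add: norm_divide norm_power)
    also have "\<dots> \<le> (c * sqrt tX * sqrt tY / real m ^ n) / m\<^sup>2"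
      using Suc.IH[OF hyp, of "tr1 m X" "tr1 m Y"] mp unfolding tX_def tY_def
      by (intro divide_right_mono) auto
    also have "\<dots> = c / real m ^ Suc n * (sqrt (tX / m) * sqrt (tY / m))"
      using mp nn by (simp add: real_sqrt_divide field_simps power2_eq_square)
    finally show ?thesis .
  qed
  have "cmod (Phi m \<psi> (Suc n) h X Y) \<le> c / real m ^ Suc n * (sqrt (tX / m) * sqrt (tY / m)) + c / real m ^ Suc n * (sqrt SX * sqrt SY)"
    unfolding Phi.simps using T1 T2 T2' by (smt (verit) norm_triangle_ineq)
  also have "\<dots> = c / real m ^ Suc n * (sqrt (tX / m) * sqrt (tY / m) + sqrt SX * sqrt SY)"
    by (simp add: algebra_simps)
  also have "\<dots> \<le> c / real m ^ Suc n * (sqrt (tX / m + SX) * sqrt (tY / m + SY))"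
    using c0 mp nn by (intro mult_left_mono sqrt2_ineq) auto
  also have "tX / m + SX = NN m (Suc n) X" unfolding tX_def SX_def by (simp add: NN_decomp[OF m])
  also have "tY / m + SY = NN m (Suc n) Y" unfolding tY_def SY_def by (simp add: NN_decomp[OF m])
  finally show ?case by (simp add: ac_simps)
qed



definition Ek :: "nat \<Rightarrow> nat \<Rightarrow> op \<Rightarrow> op" where
  "Ek m k X = (\<lambda>i j. if i ! k = j ! k \<and> i ! k < m then (\<Sum>u<m. X (i[k:=u]) (j[k:=u])) / of_nat m else 0)"
definition Dk :: "nat \<Rightarrow> real \<Rightarrow> nat \<Rightarrow> op \<Rightarrow> op" where
  "Dk m g k X = (\<lambda>i j. of_real g * X i j + of_real (1 - g) * Ek m k X i j)"
fun nz :: "nat \<Rightarrow> real \<Rightarrow> nat \<Rightarrow> nat \<Rightarrow> op \<Rightarrow> op" where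
  "nz m g s 0 X = X"
| "nz m g s (Suc n) X = Dk m g s (nz m g (Suc s) n X)"

lemma blk_Ek: "blk (Ek m (Suc k) X) a a' = Ek m k (blk X a a')"
  by (simp add: Ek_def blk_def list_update_code cong: if_cong)
lemma blk_Dk: "blk (Dk m g (Suc k) X) a a' = Dk m g k (blk X a a')"
  by (simp add: Dk_def blk_Ek[symmetric]) (simp add: blk_def)
lemma blk_nz: "blk (nz m g (Suc s) n X) a a' = nz m g s n (blk X a a')"
  by (induction n arbitrary: s) (simp_all add: blk_Dk)

lemma blk_D0: "blk (Dk m g 0 Z) a a' = (\<lambda>i j. of_real g * blk Z a a' i j +
    of_real (1 - g) * (if a = a' \<and> a < m then tr1 m Z i j / of_nat m else 0))"
  by (simp add: Dk_def Ek_def blk_def tr1_def list_update_code cong: if_cong)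

lemma Ek_lin: "Ek m k (\<lambda>i j. c * X i j + X' i j) = (\<lambda>i j. c * Ek m k X i j + Ek m k X' i j)"
  by (auto simp: Ek_def sum.distrib sum_distrib_left add_divide_distrib intro!: ext)
lemma Dk_lin: "Dk m g k (\<lambda>i j. c * X i j + X' i j) = (\<lambda>i j. c * Dk m g k X i j + Dk m g k X' i j)"
  by (simp only: Dk_def Ek_lin) (simp add: algebra_simps)
lemma nz_lin: "nz m g s n (\<lambda>i j. c * X i j + X' i j) = (\<lambda>i j. c * nz m g s n X i j + nz m g s n X' i j)"
  by (induction n arbitrary: s) (simp_all add: Dk_lin)
lemma nz_0: "nz m g s n (\<lambda>i j. 0) = (\<lambda>i j. 0)"
  using nz_lin[of m g s n "-1" "\<lambda>i j. 0" "\<lambda>i j. 0"] by simp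
lemma nz_sum: "finite U \<Longrightarrow> nz m g s n (\<lambda>i j. \<Sum>u\<in>U. F u i j) = (\<lambda>i j. \<Sum>u\<in>U. nz m g s n (F u) i j)"
proof (induction U rule: finite_induct)
  case empty then show ?case by (simp add: nz_0)
next
  case (insert x U)
  then show ?case using nz_lin[of m g s n 1 "F x" "\<lambda>i j. \<Sum>u\<in>U. F u i j"] by simp
qed
lemma nz_smul: "nz m g s n (\<lambda>i j. c * X i j) = (\<lambda>i j. c * nz m g s n X i j)"
  using nz_lin[of m g s n c X "\<lambda>i j. 0"] nz_0[of m g s n] by simp
lemma nz_add: "nz m g s n (\<lambda>i j. X i j + X' i j) = (\<lambda>i j. nz m g s n X i j + nz m g s n X' i j)"
  using nz_lin[of m g s n 1 X X'] by simp

lemma Phi_scal: "Phi m \<psi> n (\<lambda>k. c * h k) X Y = of_real c * Phi m \<psi> n h X Y"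
proof (induction n arbitrary: h X Y)
  case 0 then show ?case by simp
next
  case (Suc n)
  show ?case
    by (simp only: Phi.simps Suc) (simp add: algebra_simps sum_distrib_left add_divide_distrib)
qed

lemma corr_nz:
  assumes mg: "margs m \<psi>" and m: "0 < m"
  shows "corr m n \<psi> (nz m g 0 n X) (nz m g 0 n Y) = Phi m \<psi> n (\<lambda>k. g ^ (2 * k)) X Y"
proof (induction n arbitrary: X Y)
  case 0 then show ?case by (simp add: corr_Phi1)
next
  case (Suc n)
  define Z where "Z = nz m g 1 n X"
  define W where "W = nz m g 1 n Y"
  define F where "F a a' = (\<lambda>i j. of_real g * Xpp m Z a a' i j + (if a = a' then tr1 m Z i j / of_nat m else 0))" for a a'
  define G where "G b b' = (\<lambda>i j. of_real g * Xpp m W b b' i j + (if b = b' then tr1 m W i j / of_nat m else 0))" for b b'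
  have bF: "a < m \<Longrightarrow> blk (Dk m g 0 Z) a a' = F a a'" for a a'
    unfolding blk_D0 F_def Xpp_def by (auto simp: algebra_simps intro!: ext)
  have bG: "b < m \<Longrightarrow> blk (Dk m g 0 W) b b' = G b b'" for b b'
    unfolding blk_D0 G_def Xpp_def by (auto simp: algebra_simps intro!: ext)
  have sF: "(\<lambda>i j. \<Sum>a<m. F a a i j) = tr1 m Z"
  proof (intro ext)
    fix i j
    have "(\<Sum>a<m. F a a i j) = of_real g * (\<Sum>a<m. Xpp m Z a a i j) + (\<Sum>a<m. tr1 m Z i j / of_nat m)"
      by (simp add: F_def sum.distrib sum_distrib_left)
    thus "(\<Sum>a<m. F a a i j) = tr1 m Z i j" using m by (simp add: tr_Xpp)
  qed
  have sG: "(\<lambda>i j. \<Sum>b<m. G b b i j) = tr1 m W"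
  proof (intro ext)
    fix i j
    have "(\<Sum>b<m. G b b i j) = of_real g * (\<Sum>b<m. Xpp m W b b i j) + (\<Sum>b<m. tr1 m W i j / of_nat m)"
      by (simp add: G_def sum.distrib sum_distrib_left)
    thus "(\<Sum>b<m. G b b i j) = tr1 m W i j" using m by (simp add: tr_Xpp)
  qed
  have tZ: "tr1 m Z = nz m g 0 n (tr1 m X)"
    unfolding Z_def tr1_blk by (simp add: nz_sum blk_nz)
  have tW: "tr1 m W = nz m g 0 n (tr1 m Y)"
    unfolding W_def tr1_blk by (simp add: nz_sum blk_nz)
  have "corr m (Suc n) \<psi> (nz m g 0 (Suc n) X) (nz m g 0 (Suc n) Y)
      = (\<Sum>a<m. \<Sum>a'<m. \<Sum>b<m. \<Sum>b'<m. \<psi> (a',b') (a,b) * corr m n \<psi> (F a a') (G b b'))"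
    unfolding corr_Suc nz.simps One_nat_def[symmetric] Z_def[symmetric] W_def[symmetric] by (simp add: bF bG)
  also have "\<dots> = corr m n \<psi> (tr1 m Z) (tr1 m W) / (of_nat m)\<^sup>2 +
      (\<Sum>a<m. \<Sum>a'<m. \<Sum>b<m. \<Sum>b'<m. psip m \<psi> (a',b') (a,b) * corr m n \<psi> (F a a') (G b b'))"
    by (subst split_pi[OF bil_corr]) (simp only: sF sG)
  also have "(\<Sum>a<m. \<Sum>a'<m. \<Sum>b<m. \<Sum>b'<m. psip m \<psi> (a',b') (a,b) * corr m n \<psi> (F a a') (G b b'))
      = (\<Sum>a<m. \<Sum>a'<m. \<Sum>b<m. \<Sum>b'<m. psip m \<psi> (a',b') (a,b) *
          corr m n \<psi> (\<lambda>i j. of_real g * Xpp m Z a a' i j) (\<lambda>i j. of_real g * Xpp m W b b' i j))"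
    unfolding F_def G_def by (rule kill[OF bil_corr mg m])
  also have "\<dots> = of_real (g^2) * (\<Sum>a<m. \<Sum>a'<m. \<Sum>b<m. \<Sum>b'<m. psip m \<psi> (a',b') (a,b) *
          corr m n \<psi> (Xpp m Z a a') (Xpp m W b b'))"
    by (simp only: bil_smulL[OF bil_corr] bil_smulR[OF bil_corr] sum_distrib_left) (simp add: power2_eq_square ac_simps)
  also have "(\<Sum>a<m. \<Sum>a'<m. \<Sum>b<m. \<Sum>b'<m. psip m \<psi> (a',b') (a,b) * corr m n \<psi> (Xpp m Z a a') (Xpp m W b b'))
      = (\<Sum>a<m. \<Sum>a'<m. \<Sum>b<m. \<Sum>b'<m. psip m \<psi> (a',b') (a,b) * corr m n \<psi> (blk Z a a') (blk W b b'))"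
    by (simp only: blk_Xpp[where m=m] kill[OF bil_corr mg m])
  also have "\<dots> = (\<Sum>a<m. \<Sum>a'<m. \<Sum>b<m. \<Sum>b'<m. psip m \<psi> (a',b') (a,b) *
       Phi m \<psi> n (\<lambda>k. g ^ (2 * k)) (blk X a a') (blk Y b b'))"
    unfolding Z_def W_def by (simp add: blk_nz Suc)
  also have "corr m n \<psi> (tr1 m Z) (tr1 m W) = Phi m \<psi> n (\<lambda>k. g ^ (2 * k)) (tr1 m X) (tr1 m Y)"
    by (simp add: tZ tW Suc)
  finally have L: "corr m (Suc n) \<psi> (nz m g 0 (Suc n) X) (nz m g 0 (Suc n) Y) =
      Phi m \<psi> n (\<lambda>k. g ^ (2 * k)) (tr1 m X) (tr1 m Y) / (of_nat m)\<^sup>2 + of_real (g^2) *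
      (\<Sum>a<m. \<Sum>a'<m. \<Sum>b<m. \<Sum>b'<m. psip m \<psi> (a',b') (a,b) *
       Phi m \<psi> n (\<lambda>k. g ^ (2 * k)) (blk X a a') (blk Y b b'))" .
  have hs: "(\<lambda>k. g ^ (2 * Suc k)) = (\<lambda>k. g^2 * g ^ (2 * k))"
    by (intro ext) (simp only: mult_Suc_right power_add)
  have "Phi m \<psi> (Suc n) (\<lambda>k. g ^ (2 * k)) X Y = Phi m \<psi> n (\<lambda>k. g ^ (2 * k)) (tr1 m X) (tr1 m Y) / (of_nat m)\<^sup>2 +
      (\<Sum>a<m. \<Sum>a'<m. \<Sum>b<m. \<Sum>b'<m. psip m \<psi> (a',b') (a,b) *
       (of_real (g^2) * Phi m \<psi> n (\<lambda>k. g ^ (2 * k)) (blk X a a') (blk Y b b')))"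
    by (simp only: Phi.simps hs Phi_scal)
  also have "\<dots> = Phi m \<psi> n (\<lambda>k. g ^ (2 * k)) (tr1 m X) (tr1 m Y) / (of_nat m)\<^sup>2 + of_real (g^2) *
      (\<Sum>a<m. \<Sum>a'<m. \<Sum>b<m. \<Sum>b'<m. psip m \<psi> (a',b') (a,b) *
       Phi m \<psi> n (\<lambda>k. g ^ (2 * k)) (blk X a a') (blk Y b b'))"
    by (simp only: sum_distrib_left mult.left_commute)
  finally show ?case using L by simp
qed



lemma idx_iff: "i \<in> idx m n \<longleftrightarrow> length i = n \<and> (\<forall>l<n. i ! l < m)"
  by (auto simp: idx_def all_set_conv_all_nth)

lemma idx_upd: "length i = n \<Longrightarrow> k < n \<Longrightarrow> u < m \<Longrightarrow> i ! k < m \<Longrightarrow> (i[k:=u] \<in> idx m n) = (i \<in> idx m n)"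
  by (auto simp: idx_iff nth_list_update)

lemma idx_upd2: "i \<in> idx m n \<Longrightarrow> k < n \<Longrightarrow> u < m \<Longrightarrow> i[k:=u] \<in> idx m n"
  by (auto simp: idx_iff nth_list_update)

lemma upd_notin: "i \<notin> idx m n \<Longrightarrow> k < n \<Longrightarrow> i ! k < m \<Longrightarrow> u < m \<Longrightarrow> i[k:=u] \<notin> idx m n"
  by (cases "length i = n") (auto simp: idx_upd dest: idx_length)

definition idx0 :: "nat \<Rightarrow> nat \<Rightarrow> nat \<Rightarrow> nat list set" where
  "idx0 m n k = {i \<in> idx m n. i ! k = 0}"

lemma finite_idx0[simp]: "finite (idx0 m n k)"
  unfolding idx0_def by simp

lemma sum_idx_site:
  assumes k: "k < n" and m: "0 < m"
  shows "(\<Sum>i\<in>idx m n. g i) = (\<Sum>c<m. \<Sum>i\<in>idx0 m n k. g (i[k:=c]))"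
proof -
  have img: "idx m n = (\<lambda>(c,i). i[k:=c]) ` ({..<m} \<times> idx0 m n k)"
  proof
    show "idx m n \<subseteq> (\<lambda>(c,i). i[k:=c]) ` ({..<m} \<times> idx0 m n k)"
    proof
      fix x assume x: "x \<in> idx m n"
      have l: "length x = n" using x by (rule idx_length)
      have "x = x[k:=0, k := x ! k]" by simp
      moreover have "x[k:=0] \<in> idx0 m n k" unfolding idx0_def
        using idx_upd2[OF x k m] k l by simp
      moreover have "x ! k < m" using x k by (rule idx_nth)
      ultimately show "x \<in> (\<lambda>(c,i). i[k:=c]) ` ({..<m} \<times> idx0 m n k)"
        by (intro image_eqI[of _ _ "(x ! k, x[k:=0])"]) auto
    qed
  next
    show "(\<lambda>(c,i). i[k:=c]) ` ({..<m} \<times> idx0 m n k) \<subseteq> idx m n"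
      using idx_upd2 k by (auto simp: idx0_def)
  qed
  have inj: "inj_on (\<lambda>(c,i). i[k:=c]) ({..<m} \<times> idx0 m n k)"
  proof (unfold inj_on_def, intro ballI impI)
    fix x y assume x: "x \<in> {..<m} \<times> idx0 m n k" and y: "y \<in> {..<m} \<times> idx0 m n k"
      and e0: "(case x of (c, i) \<Rightarrow> i[k := c]) = (case y of (c, i) \<Rightarrow> i[k := c])"
    obtain c i where xe: "x = (c, i)" by (cases x)
    obtain c' i' where ye: "y = (c', i')" by (cases y)
    have e: "i[k := c] = i'[k := c']" using e0 xe ye by simp
    have i: "i \<in> idx m n" "i ! k = 0" and i': "i' \<in> idx m n" "i' ! k = 0"
      using x y xe ye by (auto simp: idx0_def)
    have li: "length i = n" "length i' = n" using i i' by (simp_all add: idx_length)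
    have "c = c'" using arg_cong[OF e, of "\<lambda>x. x ! k"] li k by simp
    moreover have "i = i'"
    proof -
      have "i = i[k:=c, k:=0]" using i(2) by (metis list_update_id list_update_overwrite)
      also have "\<dots> = i'[k:=c', k:=0]" using e by simp
      also have "\<dots> = i'" using i'(2) by (metis list_update_id list_update_overwrite)
      finally show ?thesis .
    qed
    ultimately show "x = y" using xe ye by simp
  qed
  show ?thesis
    by (subst img, subst sum.reindex[OF inj]) (simp add: sum.cartesian_product split_beta)
qed

lemma sum2_site:
  assumes k: "k < n" and m: "0 < m"
  shows "(\<Sum>i\<in>idx m n. \<Sum>j\<in>idx m n. F i j) =
    (\<Sum>i\<in>idx0 m n k. \<Sum>j\<in>idx0 m n k. \<Sum>c<m. \<Sum>c'<m. F (i[k:=c]) (j[k:=c']))"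
  by (simp add: sum_idx_site[OF k m] sum.swap[of _ "{..<m}" "idx0 m n k"])

lemma idx0_len: "i \<in> idx0 m n k \<Longrightarrow> length i = n"
  by (auto simp: idx0_def idx_def)

lemma Ek_site:
  assumes "i \<in> idx0 m n k" "j \<in> idx0 m n k" "k < n" "c < m" "c' < m"
  shows "Ek m k X (i[k:=c]) (j[k:=c']) = (if c = c' then (\<Sum>u<m. X (i[k:=u]) (j[k:=u])) / of_nat m else 0)"
  using assms idx0_len[OF assms(1)] idx0_len[OF assms(2)] by (auto simp: Ek_def)

lemma Ek_ext:
  assumes X: "ext_on (idx m n) X" and k: "k < n"
  shows "ext_on (idx m n) (Ek m k X)"
  unfolding ext_on_def
proof (intro allI impI)
  fix i j assume ij: "i \<notin> idx m n \<or> j \<notin> idx m n"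
  show "Ek m k X i j = 0"
  proof (cases "i ! k = j ! k \<and> i ! k < m")
    case True
    have Z: "X (i[k:=u]) (j[k:=u]) = 0" if "u < m" for u
    proof -
      have "i[k:=u] \<notin> idx m n \<or> j[k:=u] \<notin> idx m n"
        using ij upd_notin[OF _ k _ that, of i] upd_notin[OF _ k _ that, of j] True by auto
      thus ?thesis using X unfolding ext_on_def by blast
    qed
    hence "(\<Sum>u<m. X (i[k:=u]) (j[k:=u])) = 0" by simp
    then show ?thesis by (simp add: Ek_def)
  next
    case False then show ?thesis by (auto simp: Ek_def)
  qed
qed

lemma Ek_herm:
  assumes X: "herm_on (idx m n) X" and k: "k < n"
  shows "herm_on (idx m n) (Ek m k X)"
  unfolding herm_on_def
proof (intro conjI ballI)
  show "ext_on (idx m n) (Ek m k X)" using X k Ek_ext by (auto simp: herm_on_def)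
next
  fix i j assume i: "i \<in> idx m n" and j: "j \<in> idx m n"
  have "X (i[k:=u]) (j[k:=u]) = cnj (X (j[k:=u]) (i[k:=u]))" if "u < m" for u
    using X idx_upd2[OF i k that] idx_upd2[OF j k that] unfolding herm_on_def by blast
  then show "Ek m k X i j = cnj (Ek m k X j i)"
    by (auto simp: Ek_def intro!: sum.cong)
qed

definition qf :: "'a set \<Rightarrow> ('a \<Rightarrow> 'a \<Rightarrow> complex) \<Rightarrow> ('a \<Rightarrow> complex) \<Rightarrow> complex" where
  "qf S X v = (\<Sum>i\<in>S. \<Sum>j\<in>S. cnj (v i) * X i j * v j)"

lemma psd_on_qf: "psd_on S X \<longleftrightarrow> herm_on S X \<and> (\<forall>v. 0 \<le> Re (qf S X v))"
  by (simp add: psd_on_def qf_def)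

lemma qf_lin: "qf S (\<lambda>i j. a * X i j + b * Y i j) v = a * qf S X v + b * qf S Y v"
  by (simp add: qf_def algebra_simps sum.distrib sum_distrib_left)

definition wv :: "(nat list \<Rightarrow> complex) \<Rightarrow> nat \<Rightarrow> nat \<Rightarrow> nat \<Rightarrow> nat list \<Rightarrow> complex" where
  "wv v k c u x = (if x ! k = u then v (x[k:=c]) else 0)"

lemma qf_Ek:
  assumes k: "k < n" and m: "0 < m"
  shows "qf (idx m n) (Ek m k X) v = (\<Sum>c<m. \<Sum>u<m. qf (idx m n) X (wv v k c u)) / of_nat m"
proof -
  have L: "qf (idx m n) (Ek m k X) v = (\<Sum>i\<in>idx0 m n k. \<Sum>j\<in>idx0 m n k. \<Sum>c<m.
      cnj (v (i[k:=c])) * ((\<Sum>u<m. X (i[k:=u]) (j[k:=u])) / of_nat m) * v (j[k:=c]))"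
    unfolding qf_def sum2_site[OF k m]
  proof (intro sum.cong refl)
    fix i j c assume i: "i \<in> idx0 m n k" and j: "j \<in> idx0 m n k" and c: "c \<in> {..<m}"
    have "(\<Sum>c'<m. cnj (v (i[k := c])) * Ek m k X (i[k := c]) (j[k := c']) * v (j[k := c']))
        = (\<Sum>c'<m. if c' = c then cnj (v (i[k := c])) * ((\<Sum>u<m. X (i[k:=u]) (j[k:=u])) / of_nat m) * v (j[k := c']) else 0)"
      using i j k c by (intro sum.cong refl) (auto simp: Ek_site)
    also have "\<dots> = cnj (v (i[k:=c])) * ((\<Sum>u<m. X (i[k:=u]) (j[k:=u])) / of_nat m) * v (j[k:=c])"
      using c by (simp add: sum.delta)
    finally show "(\<Sum>c'<m. cnj (v (i[k := c])) * Ek m k X (i[k := c]) (j[k := c']) * v (j[k := c']))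
        = cnj (v (i[k:=c])) * ((\<Sum>u<m. X (i[k:=u]) (j[k:=u])) / of_nat m) * v (j[k:=c])" .
  qed
  have W: "qf (idx m n) X (wv v k c u) = (\<Sum>i\<in>idx0 m n k. \<Sum>j\<in>idx0 m n k.
      cnj (v (i[k:=c])) * X (i[k:=u]) (j[k:=u]) * v (j[k:=c]))" if c: "c < m" and u: "u < m" for c u
    unfolding qf_def sum2_site[OF k m]
  proof (intro sum.cong refl)
    fix i j assume i: "i \<in> idx0 m n k" and j: "j \<in> idx0 m n k"
    have li: "length i = n" "length j = n" using i j by (simp_all add: idx0_len)
    have "(\<Sum>c1<m. \<Sum>c2<m. cnj (wv v k c u (i[k := c1])) * X (i[k := c1]) (j[k := c2]) * wv v k c u (j[k := c2]))
       = (\<Sum>c1<m. \<Sum>c2<m. if c1 = u then (if c2 = u then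
            cnj (v (i[k:=c])) * X (i[k := c1]) (j[k := c2]) * v (j[k:=c]) else 0) else 0)"
      using li k by (intro sum.cong refl) (auto simp: wv_def)
    also have "\<dots> = cnj (v (i[k:=c])) * X (i[k:=u]) (j[k:=u]) * v (j[k:=c])"
      using u by (simp only: sum_if_const sum.delta finite_lessThan) simp
    finally show "(\<Sum>c1<m. \<Sum>c2<m. cnj (wv v k c u (i[k := c1])) * X (i[k := c1]) (j[k := c2]) * wv v k c u (j[k := c2]))
       = cnj (v (i[k:=c])) * X (i[k:=u]) (j[k:=u]) * v (j[k:=c])" .
  qed
  have "(\<Sum>c<m. \<Sum>u<m. qf (idx m n) X (wv v k c u)) = (\<Sum>c<m. \<Sum>u<m. \<Sum>i\<in>idx0 m n k. \<Sum>j\<in>idx0 m n k.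
      cnj (v (i[k:=c])) * X (i[k:=u]) (j[k:=u]) * v (j[k:=c]))"
    by (intro sum.cong refl) (simp add: W)
  also have "\<dots> = (\<Sum>i\<in>idx0 m n k. \<Sum>j\<in>idx0 m n k. \<Sum>c<m. \<Sum>u<m.
      cnj (v (i[k:=c])) * X (i[k:=u]) (j[k:=u]) * v (j[k:=c]))"
    by (simp add: sum.swap[of _ "{..<m}" "idx0 m n k"])
  finally show ?thesis unfolding L
    by (simp add: sum_divide_distrib sum_distrib_left sum_distrib_right ac_simps)
qed

lemma Ek_psd:
  assumes X: "psd_on (idx m n) X" and k: "k < n" and m: "0 < m"
  shows "psd_on (idx m n) (Ek m k X)"
  unfolding psd_on_qf
proof (intro conjI allI)
  show "herm_on (idx m n) (Ek m k X)" using X k Ek_herm by (auto simp: psd_on_qf)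
next
  fix v
  have "0 \<le> (\<Sum>c<m. \<Sum>u<m. Re (qf (idx m n) X (wv v k c u))) / real m"
    using X by (intro divide_nonneg_nonneg sum_nonneg) (auto simp: psd_on_qf)
  thus "0 \<le> Re (qf (idx m n) (Ek m k X) v)"
    by (simp add: qf_Ek[OF k m] Re_sum)
qed


lemma sq_sum_le: "(cmod (\<Sum>u<m. x u))\<^sup>2 \<le> real m * (\<Sum>u<m. (cmod (x u))\<^sup>2)"
proof -
  have "(cmod (\<Sum>u<m. x u))\<^sup>2 \<le> (\<Sum>u<m. cmod (x u))\<^sup>2"
    by (intro power_mono norm_sum) auto
  also have "\<dots> = (\<Sum>u<m. 1 * cmod (x u))\<^sup>2" by simp
  also have "\<dots> \<le> (\<Sum>u<m. 1\<^sup>2) * (\<Sum>u<m. (cmod (x u))\<^sup>2)" by (rule cs_sum)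
  finally show ?thesis by simp
qed

lemma Ek_NN:
  assumes k: "k < n" and m: "0 < m"
  shows "NN m n (Ek m k X) \<le> NN m n X"
proof -
  have "NN m n (Ek m k X) = (\<Sum>i\<in>idx0 m n k. \<Sum>j\<in>idx0 m n k. \<Sum>c<m.
      (cmod ((\<Sum>u<m. X (i[k:=u]) (j[k:=u])) / of_nat m))\<^sup>2)"
    unfolding NN_def sum2_site[OF k m]
  proof (intro sum.cong refl)
    fix i j c assume i: "i \<in> idx0 m n k" and j: "j \<in> idx0 m n k" and c: "c \<in> {..<m}"
    have "(\<Sum>c'<m. (cmod (Ek m k X (i[k := c]) (j[k := c'])))\<^sup>2)
      = (\<Sum>c'<m. if c' = c then (cmod ((\<Sum>u<m. X (i[k:=u]) (j[k:=u])) / of_nat m))\<^sup>2 else 0)"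
      using i j k c by (intro sum.cong refl) (auto simp: Ek_site)
    also have "\<dots> = (cmod ((\<Sum>u<m. X (i[k:=u]) (j[k:=u])) / of_nat m))\<^sup>2"
      using c by (simp add: sum.delta)
    finally show "(\<Sum>c'<m. (cmod (Ek m k X (i[k := c]) (j[k := c'])))\<^sup>2)
      = (cmod ((\<Sum>u<m. X (i[k:=u]) (j[k:=u])) / of_nat m))\<^sup>2" .
  qed
  also have "\<dots> \<le> (\<Sum>i\<in>idx0 m n k. \<Sum>j\<in>idx0 m n k. \<Sum>c<m. \<Sum>c'<m. (cmod (X (i[k:=c]) (j[k:=c'])))\<^sup>2)"
  proof (rule sum_mono, rule sum_mono)
    fix i j
    have "(\<Sum>c<m. (cmod ((\<Sum>u<m. X (i[k:=u]) (j[k:=u])) / of_nat m))\<^sup>2)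
        = (cmod (\<Sum>u<m. X (i[k:=u]) (j[k:=u])))\<^sup>2 / real m"
      using m by (simp add: norm_divide power_divide power2_eq_square)
    also have "\<dots> \<le> (\<Sum>u<m. (cmod (X (i[k:=u]) (j[k:=u])))\<^sup>2)"
      using sq_sum_le[of "\<lambda>u. X (i[k:=u]) (j[k:=u])" m] m by (simp add: divide_le_eq ac_simps)
    also have "\<dots> \<le> (\<Sum>c<m. \<Sum>c'<m. (cmod (X (i[k:=c]) (j[k:=c'])))\<^sup>2)"
      by (intro sum_mono member_le_sum) auto
    finally show "(\<Sum>c<m. (cmod ((\<Sum>u<m. X (i[k:=u]) (j[k:=u])) / of_nat m))\<^sup>2)
        \<le> (\<Sum>c<m. \<Sum>c'<m. (cmod (X (i[k:=c]) (j[k:=c'])))\<^sup>2)" .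
  qed
  also have "\<dots> = NN m n X" unfolding NN_def sum2_site[OF k m] ..
  finally show ?thesis .
qed

lemma upd_eq_iff:
  assumes "i ! k = j ! k" "k < length i"
  shows "(i[k:=u] = j[k:=u]) = (i = j)"
proof
  assume e: "i[k:=u] = j[k:=u]"
  have l: "length i = length j" using arg_cong[OF e, of length] by simp
  show "i = j"
  proof (rule nth_equalityI[OF l])
    fix l assume "l < length i"
    thus "i ! l = j ! l" using arg_cong[OF e, of "\<lambda>x. x ! l"] assms l
      by (cases "l = k") (auto simp: nth_list_update)
  qed
qed simp

lemma Ek_unital:
  assumes k: "k < n" and m: "0 < m"
  shows "Ek m k (id_on (idx m n)) = id_on (idx m n)"
proof (intro ext)
  fix i j
  show "Ek m k (id_on (idx m n)) i j = id_on (idx m n) i j"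
  proof (cases "i ! k = j ! k \<and> i ! k < m")
    case True
    have t: "(i[k:=u] = j[k:=u] \<and> i[k:=u] \<in> idx m n) = (i = j \<and> i \<in> idx m n)" if u: "u < m" for u
    proof (cases "length i = n")
      case True2: True
      show ?thesis using idx_upd[OF True2 k u] upd_eq_iff[of i k j u] True True2 k by auto
    next
      case False
      thus ?thesis by (auto simp: idx_iff)
    qed
    have "(\<Sum>u<m. id_on (idx m n) (i[k:=u]) (j[k:=u])) = (\<Sum>u<m. if i = j \<and> i \<in> idx m n then 1 else 0)"
      unfolding id_on_def using t by (intro sum.cong refl) (simp only: lessThan_iff)
    thus ?thesis using True m by (simp add: Ek_def id_on_def)
  next
    case False
    thus ?thesis using k by (auto simp: Ek_def id_on_def dest: idx_nth)
  qed
qed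

lemma Dk_ext:
  assumes X: "ext_on (idx m n) X" and k: "k < n"
  shows "ext_on (idx m n) (Dk m g k X)"
  unfolding ext_on_def
proof (intro allI impI)
  fix i j assume ij: "i \<notin> idx m n \<or> j \<notin> idx m n"
  have "Ek m k X i j = 0" using Ek_ext[OF X k] ij unfolding ext_on_def by blast
  moreover have "X i j = 0" using X ij unfolding ext_on_def by blast
  ultimately show "Dk m g k X i j = 0" by (simp add: Dk_def)
qed

lemma Dk_herm:
  assumes X: "herm_on (idx m n) X" and k: "k < n"
  shows "herm_on (idx m n) (Dk m g k X)"
proof -
  have E: "herm_on (idx m n) (Ek m k X)" using Ek_herm[OF X k] .
  show ?thesis
    unfolding herm_on_def
  proof (intro conjI ballI)
    show "ext_on (idx m n) (Dk m g k X)" using X Dk_ext[of m n X k g] k unfolding herm_on_def by blast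
  next
    fix i j assume i: "i \<in> idx m n" and j: "j \<in> idx m n"
    have hx: "X i j = cnj (X j i)" using X i j unfolding herm_on_def by blast
    have he: "Ek m k X i j = cnj (Ek m k X j i)" using E i j unfolding herm_on_def by blast
    show "Dk m g k X i j = cnj (Dk m g k X j i)" by (simp add: Dk_def hx he)
  qed
qed

lemma Dk_psd:
  assumes X: "psd_on (idx m n) X" and k: "k < n" and m: "0 < m" and g: "0 \<le> g" "g \<le> 1"
  shows "psd_on (idx m n) (Dk m g k X)"
  unfolding psd_on_qf
proof (intro conjI allI)
  show "herm_on (idx m n) (Dk m g k X)" using X k Dk_herm by (auto simp: psd_on_qf)
next
  fix v
  have a: "0 \<le> Re (qf (idx m n) X v)" using X by (simp add: psd_on_qf)
  have b: "0 \<le> Re (qf (idx m n) (Ek m k X) v)" using Ek_psd[OF X k m] by (simp add: psd_on_qf)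
  have "Re (qf (idx m n) (Dk m g k X) v) = g * Re (qf (idx m n) X v) + (1 - g) * Re (qf (idx m n) (Ek m k X) v)"
    unfolding Dk_def qf_lin by simp
  thus "0 \<le> Re (qf (idx m n) (Dk m g k X) v)" using a b g by simp
qed

lemma convex_sq:
  fixes x y :: complex and g :: real
  assumes "0 \<le> g" "g \<le> 1"
  shows "(cmod (of_real g * x + of_real (1 - g) * y))\<^sup>2 \<le> g * (cmod x)\<^sup>2 + (1 - g) * (cmod y)\<^sup>2"
proof -
  have n1: "cmod (complex_of_real (1 - g)) = 1 - g" using assms by (simp only: norm_of_real abs_of_nonneg diff_ge_0_iff_ge)
  have "cmod (of_real g * x + of_real (1 - g) * y) \<le> cmod (of_real g * x) + cmod (of_real (1 - g) * y)"
    by (rule norm_triangle_ineq)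
  also have "\<dots> = g * cmod x + (1 - g) * cmod y"
    using assms by (simp only: norm_mult n1) simp
  finally have "cmod (of_real g * x + of_real (1 - g) * y) \<le> g * cmod x + (1 - g) * cmod y" .
  hence "(cmod (of_real g * x + of_real (1 - g) * y))\<^sup>2 \<le> (g * cmod x + (1 - g) * cmod y)\<^sup>2"
    by (intro power_mono) auto
  also have "\<dots> \<le> g * (cmod x)\<^sup>2 + (1 - g) * (cmod y)\<^sup>2"
  proof -
    have "0 \<le> g * (1 - g) * (cmod x - cmod y)\<^sup>2" using assms by simp
    thus ?thesis by (simp add: power2_eq_square algebra_simps)
  qed
  finally show ?thesis .
qed

lemma Dk_NN:
  assumes k: "k < n" and m: "0 < m" and g: "0 \<le> g" "g \<le> 1"
  shows "NN m n (Dk m g k X) \<le> NN m n X"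
proof -
  have "NN m n (Dk m g k X) = (\<Sum>i\<in>idx m n. \<Sum>j\<in>idx m n.
     (cmod (of_real g * X i j + of_real (1 - g) * Ek m k X i j))\<^sup>2)"
    by (simp only: NN_def Dk_def)
  also have "\<dots> \<le> (\<Sum>i\<in>idx m n. \<Sum>j\<in>idx m n. g * (cmod (X i j))\<^sup>2 + (1 - g) * (cmod (Ek m k X i j))\<^sup>2)"
    by (intro sum_mono convex_sq[OF g])
  also have "\<dots> = g * NN m n X + (1 - g) * NN m n (Ek m k X)"
    by (simp add: NN_def sum.distrib sum_distrib_left)
  finally have "NN m n (Dk m g k X) \<le> g * NN m n X + (1 - g) * NN m n (Ek m k X)" .
  also have "\<dots> \<le> g * NN m n X + (1 - g) * NN m n X"
    using Ek_NN[OF k m, of X] g by (intro add_left_mono mult_left_mono) auto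
  finally show ?thesis by (simp add: algebra_simps)
qed

lemma Dk_unital: "k < n \<Longrightarrow> 0 < m \<Longrightarrow> Dk m g k (id_on (idx m n)) = id_on (idx m n)"
  by (simp add: Dk_def Ek_unital algebra_simps)

lemma nz_ext: "ext_on (idx m n) X \<Longrightarrow> s + n' \<le> n \<Longrightarrow> ext_on (idx m n) (nz m g s n' X)"
  by (induction n' arbitrary: s) (auto intro!: Dk_ext)

lemma nz_herm: "herm_on (idx m n) X \<Longrightarrow> s + n' \<le> n \<Longrightarrow> herm_on (idx m n) (nz m g s n' X)"
  by (induction n' arbitrary: s) (auto intro!: Dk_herm)

lemma nz_psd: "psd_on (idx m n) X \<Longrightarrow> s + n' \<le> n \<Longrightarrow> 0 < m \<Longrightarrow> 0 \<le> g \<Longrightarrow> g \<le> 1 \<Longrightarrow>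
    psd_on (idx m n) (nz m g s n' X)"
  by (induction n' arbitrary: s) (auto intro!: Dk_psd)

lemma nz_NN: "s + n' \<le> n \<Longrightarrow> 0 < m \<Longrightarrow> 0 \<le> g \<Longrightarrow> g \<le> 1 \<Longrightarrow> NN m n (nz m g s n' X) \<le> NN m n X"
proof (induction n' arbitrary: s)
  case 0 then show ?case by simp
next
  case (Suc n')
  have "NN m n (nz m g s (Suc n') X) \<le> NN m n (nz m g (Suc s) n' X)"
    using Suc.prems by (simp add: Dk_NN)
  also have "\<dots> \<le> NN m n X" using Suc.prems by (intro Suc.IH) auto
  finally show ?case .
qed

lemma nz_unital: "s + n' \<le> n \<Longrightarrow> 0 < m \<Longrightarrow> nz m g s n' (id_on (idx m n)) = id_on (idx m n)"
  by (induction n' arbitrary: s) (auto simp: Dk_unital)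




lemma B0: "std_onb m B \<Longrightarrow> c < m \<Longrightarrow> c' < m \<Longrightarrow> B 0 c c' = (if c = c' then 1 else 0)"
  by (simp add: std_onb_def id_on_def)

lemma trB:
  assumes B: "std_onb m B" and s: "s < m\<^sup>2" and m: "0 < m"
  shows "(\<Sum>c<m. cnj (B s c c)) = (if s = 0 then of_nat m else 0)"
proof (cases "s = 0")
  case True then show ?thesis using B by (simp add: B0)
next
  case False
  have all: "\<forall>k<m\<^sup>2. \<forall>l<m\<^sup>2. (1 / of_nat m) * (\<Sum>i<m. \<Sum>j<m. cnj (B k i j) * B l i j)
                         = (if k = l then 1 else 0)" using B unfolding std_onb_def by blast
  have m2: "0 < m\<^sup>2" using m by simp
  have "(1 / of_nat m) * (\<Sum>i<m. \<Sum>j<m. cnj (B s i j) * B 0 i j) = 0"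
    using all[rule_format, OF s m2] False by simp
  moreover have "(\<Sum>i<m. \<Sum>j<m. cnj (B s i j) * B 0 i j) = (\<Sum>i<m. \<Sum>j<m. if j = i then cnj (B s i j) else 0)"
    using B by (intro sum.cong refl) (simp add: B0)
  ultimately have "(\<Sum>i<m. cnj (B s i i)) = 0" using m by (simp add: sum.delta)
  then show ?thesis using False by simp
qed

definition Rt :: "nat \<Rightarrow> (nat \<Rightarrow> nat \<Rightarrow> nat \<Rightarrow> complex) \<Rightarrow> nat list \<Rightarrow> nat \<Rightarrow> nat list \<Rightarrow> nat list \<Rightarrow> complex" where
  "Rt n B \<sigma> k i j = (\<Prod>l\<in>{..<n} - {k}. B (\<sigma> ! l) (i ! l) (j ! l))"

lemma BT_site:
  assumes "length i = n" "length j = n" "k < n"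
  shows "basis_tensor n B \<sigma> (i[k:=c]) (j[k:=c']) = B (\<sigma> ! k) c c' * Rt n B \<sigma> k i j"
proof -
  have "basis_tensor n B \<sigma> (i[k:=c]) (j[k:=c']) = B (\<sigma> ! k) (i[k:=c] ! k) (j[k:=c'] ! k) *
      (\<Prod>l\<in>{..<n} - {k}. B (\<sigma> ! l) (i[k:=c] ! l) (j[k:=c'] ! l))"
    unfolding basis_tensor_def using assms(3) by (simp only: prod.remove[OF finite_lessThan lessThan_iff[THEN iffD2, OF assms(3)]])
  also have "(\<Prod>l\<in>{..<n} - {k}. B (\<sigma> ! l) (i[k:=c] ! l) (j[k:=c'] ! l)) = Rt n B \<sigma> k i j"
    unfolding Rt_def by (intro prod.cong refl) auto
  finally show ?thesis using assms by simp
qed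

lemma fcoeff_Ek:
  assumes B: "std_onb m B" and \<sigma>: "\<sigma> \<in> idx (m\<^sup>2) n" and k: "k < n" and m: "0 < m"
  shows "fcoeff m n B (Ek m k X) \<sigma> = (if \<sigma> ! k = 0 then fcoeff m n B X \<sigma> else 0)"
proof -
  define S where "S i j = (\<Sum>u<m. X (i[k:=u]) (j[k:=u]))" for i j
  have sk: "\<sigma> ! k < m\<^sup>2" using \<sigma> k by (rule idx_nth)
  have Q1: "(\<Sum>i\<in>idx m n. \<Sum>j\<in>idx m n. cnj (basis_tensor n B \<sigma> i j) * Ek m k X i j)
      = (\<Sum>i\<in>idx0 m n k. \<Sum>j\<in>idx0 m n k. (\<Sum>c<m. cnj (B (\<sigma> ! k) c c)) * cnj (Rt n B \<sigma> k i j) * S i j / of_nat m)"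
    unfolding sum2_site[OF k m]
  proof (intro sum.cong refl)
    fix i j assume i: "i \<in> idx0 m n k" and j: "j \<in> idx0 m n k"
    have li: "length i = n" "length j = n" using i j by (simp_all add: idx0_len)
    have "(\<Sum>c<m. \<Sum>c'<m. cnj (basis_tensor n B \<sigma> (i[k := c]) (j[k := c'])) * Ek m k X (i[k := c]) (j[k := c']))
        = (\<Sum>c<m. \<Sum>c'<m. if c' = c then cnj (B (\<sigma> ! k) c c) * cnj (Rt n B \<sigma> k i j) * S i j / of_nat m else 0)"
      using i j k li by (intro sum.cong refl) (auto simp: Ek_site BT_site S_def)
    also have "\<dots> = (\<Sum>c<m. cnj (B (\<sigma> ! k) c c)) * cnj (Rt n B \<sigma> k i j) * S i j / of_nat m"
      by (simp add: sum.delta sum_distrib_right sum_divide_distrib)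
    finally show "(\<Sum>c<m. \<Sum>c'<m. cnj (basis_tensor n B \<sigma> (i[k := c]) (j[k := c'])) * Ek m k X (i[k := c]) (j[k := c']))
        = (\<Sum>c<m. cnj (B (\<sigma> ! k) c c)) * cnj (Rt n B \<sigma> k i j) * S i j / of_nat m" .
  qed
  show ?thesis
  proof (cases "\<sigma> ! k = 0")
    case False
    then show ?thesis unfolding fcoeff_def Q1 using trB[OF B sk m] by simp
  next
    case True
    have Q2: "(\<Sum>i\<in>idx m n. \<Sum>j\<in>idx m n. cnj (basis_tensor n B \<sigma> i j) * X i j)
      = (\<Sum>i\<in>idx0 m n k. \<Sum>j\<in>idx0 m n k. cnj (Rt n B \<sigma> k i j) * S i j)"
      unfolding sum2_site[OF k m]
    proof (intro sum.cong refl)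
      fix i j assume i: "i \<in> idx0 m n k" and j: "j \<in> idx0 m n k"
      have li: "length i = n" "length j = n" using i j by (simp_all add: idx0_len)
      have "(\<Sum>c<m. \<Sum>c'<m. cnj (basis_tensor n B \<sigma> (i[k := c]) (j[k := c'])) * X (i[k := c]) (j[k := c']))
          = (\<Sum>c<m. \<Sum>c'<m. if c' = c then cnj (Rt n B \<sigma> k i j) * X (i[k := c]) (j[k := c']) else 0)"
        using i j k li True B by (intro sum.cong refl) (auto simp: BT_site B0)
      also have "\<dots> = cnj (Rt n B \<sigma> k i j) * S i j"
        by (simp add: sum.delta S_def sum_distrib_left)
      finally show "(\<Sum>c<m. \<Sum>c'<m. cnj (basis_tensor n B \<sigma> (i[k := c]) (j[k := c'])) * X (i[k := c]) (j[k := c']))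
          = cnj (Rt n B \<sigma> k i j) * S i j" .
    qed
    show ?thesis unfolding fcoeff_def Q1 Q2 using trB[OF B sk m] True m by simp
  qed
qed

lemma fcoeff_lin: "fcoeff m n B (\<lambda>i j. a * X i j + b * Y i j) \<sigma> = a * fcoeff m n B X \<sigma> + b * fcoeff m n B Y \<sigma>"
  by (simp add: fcoeff_def algebra_simps sum.distrib sum_distrib_left)

lemma fcoeff_Dk:
  assumes B: "std_onb m B" and \<sigma>: "\<sigma> \<in> idx (m\<^sup>2) n" and k: "k < n" and m: "0 < m"
  shows "fcoeff m n B (Dk m g k X) \<sigma> = (if \<sigma> ! k = 0 then 1 else of_real g) * fcoeff m n B X \<sigma>"
  unfolding Dk_def fcoeff_lin fcoeff_Ek[OF assms] by (simp add: algebra_simps)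

lemma fcoeff_nz:
  assumes B: "std_onb m B" and \<sigma>: "\<sigma> \<in> idx (m\<^sup>2) n" and m: "0 < m"
  shows "s + n' \<le> n \<Longrightarrow> fcoeff m n B (nz m g s n' X) \<sigma> =
     (\<Prod>k\<in>{s..<s+n'}. if \<sigma> ! k = 0 then 1 else of_real g) * fcoeff m n B X \<sigma>"
proof (induction n' arbitrary: s)
  case 0 then show ?case by simp
next
  case (Suc n')
  have "fcoeff m n B (nz m g s (Suc n') X) \<sigma> = (if \<sigma> ! s = 0 then 1 else of_real g) *
      fcoeff m n B (nz m g (Suc s) n' X) \<sigma>"
    using Suc.prems by (simp add: fcoeff_Dk[OF B \<sigma> _ m])
  also have "\<dots> = (if \<sigma> ! s = 0 then 1 else of_real g) *
      ((\<Prod>k\<in>{Suc s..<Suc s+n'}. if \<sigma> ! k = 0 then 1 else of_real g) * fcoeff m n B X \<sigma>)"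
    using Suc.prems by (subst Suc.IH) auto
  also have "\<dots> = (\<Prod>k\<in>{s..<s+Suc n'}. if \<sigma> ! k = 0 then 1 else of_real g) * fcoeff m n B X \<sigma>"
    by (simp add: prod.atLeast_Suc_lessThan)
  finally show ?case .
qed

lemma weight_Cons: "weight (a # \<sigma>) = (if a = 0 then 0 else 1) + weight \<sigma>"
  by (simp add: weight_def)

lemma prod_weight: "(\<Prod>k<length \<sigma>. if \<sigma> ! k = 0 then 1 else c) = c ^ weight \<sigma>"
proof (induction \<sigma>)
  case Nil then show ?case by (simp add: weight_def)
next
  case (Cons a \<sigma>)
  show ?case
    by (simp only: length_Cons prod.lessThan_Suc_shift nth_Cons_0 nth_Cons_Suc Cons weight_Cons power_add) simp
qed

lemma fcoeff_noise:
  assumes B: "std_onb m B" and \<sigma>: "\<sigma> \<in> idx (m\<^sup>2) n" and m: "0 < m"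
  shows "fcoeff m n B (nz m g 0 n X) \<sigma> = of_real g ^ weight \<sigma> * fcoeff m n B X \<sigma>"
proof -
  have l: "length \<sigma> = n" using \<sigma> by (rule idx_length)
  show ?thesis
    using fcoeff_nz[OF B \<sigma> m, of 0 n g X] prod_weight[of \<sigma> "complex_of_real g"] l
    by (simp add: atLeast0LessThan)
qed



lemma prod_if_const: "(\<Prod>k<n. if P k then c else 0) = (if \<forall>k<n. P k then c ^ n else (0::'a::comm_semiring_1))"
  by (induction n) (auto simp: less_Suc_eq mult.commute)

lemma BT_orth:
  assumes B: "std_onb m B" and m: "0 < m" and \<sigma>: "\<sigma> \<in> idx (m\<^sup>2) n" and \<tau>: "\<tau> \<in> idx (m\<^sup>2) n"
  shows "(\<Sum>i\<in>idx m n. \<Sum>j\<in>idx m n. cnj (basis_tensor n B \<sigma> i j) * basis_tensor n B \<tau> i j)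
     = (if \<sigma> = \<tau> then of_nat m ^ n else 0)"
proof -
  have all: "\<forall>k<m\<^sup>2. \<forall>l<m\<^sup>2. (1 / of_nat m) * (\<Sum>i<m. \<Sum>j<m. cnj (B k i j) * B l i j)
                         = (if k = l then 1 else 0)" using B unfolding std_onb_def by blast
  have f: "(\<Sum>u<m. \<Sum>v<m. cnj (B (\<sigma> ! k) u v) * B (\<tau> ! k) u v) = (if \<sigma> ! k = \<tau> ! k then of_nat m else 0)"
    if k: "k < n" for k
  proof -
    have "(1 / of_nat m) * (\<Sum>u<m. \<Sum>v<m. cnj (B (\<sigma> ! k) u v) * B (\<tau> ! k) u v) = (if \<sigma> ! k = \<tau> ! k then 1 else 0)"
      using all idx_nth[OF \<sigma> k] idx_nth[OF \<tau> k] by blast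
    thus ?thesis using m by (auto simp: field_simps split: if_splits)
  qed
  have "(\<Sum>i\<in>idx m n. \<Sum>j\<in>idx m n. cnj (basis_tensor n B \<sigma> i j) * basis_tensor n B \<tau> i j)
      = (\<Sum>i\<in>idx m n. \<Sum>j\<in>idx m n. \<Prod>k<n. cnj (B (\<sigma> ! k) (i ! k) (j ! k)) * B (\<tau> ! k) (i ! k) (j ! k))"
    unfolding basis_tensor_def by (simp add: prod.distrib)
  also have "\<dots> = (\<Prod>k<n. \<Sum>u<m. \<Sum>v<m. cnj (B (\<sigma> ! k) u v) * B (\<tau> ! k) u v)"
    by (rule sum_idx_prod2)
  also have "\<dots> = (\<Prod>k<n. if \<sigma> ! k = \<tau> ! k then of_nat m else 0)"
    by (intro prod.cong refl) (simp add: f)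
  also have "\<dots> = (if \<sigma> = \<tau> then of_nat m ^ n else 0)"
  proof -
    have "(\<forall>k<n. \<sigma> ! k = \<tau> ! k) = (\<sigma> = \<tau>)"
      using idx_length[OF \<sigma>] idx_length[OF \<tau>] by (auto simp: list_eq_iff_nth_eq)
    thus ?thesis by (simp add: prod_if_const)
  qed
  finally show ?thesis .
qed

lemma comb_norm:
  assumes B: "std_onb m B" and m: "0 < m" and H: "H \<subseteq> idx (m\<^sup>2) n"
  shows "NN m n (\<lambda>i j. \<Sum>\<sigma>\<in>H. a \<sigma> * basis_tensor n B \<sigma> i j) = real m ^ n * (\<Sum>\<sigma>\<in>H. (cmod (a \<sigma>))\<^sup>2)"
proof -
  have finH: "finite H" using H finite_subset finite_idx by blast
  have "complex_of_real (NN m n (\<lambda>i j. \<Sum>\<sigma>\<in>H. a \<sigma> * basis_tensor n B \<sigma> i j))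
    = (\<Sum>i\<in>idx m n. \<Sum>j\<in>idx m n. \<Sum>\<sigma>\<in>H. \<Sum>\<tau>\<in>H. a \<sigma> * (cnj (a \<tau>) *
        (basis_tensor n B \<sigma> i j * cnj (basis_tensor n B \<tau> i j))))"
    unfolding NN_def of_real_sum cmod_sq_cnj
    by (simp add: sum_product ac_simps)
  also have "\<dots> = (\<Sum>\<sigma>\<in>H. \<Sum>\<tau>\<in>H. a \<sigma> * cnj (a \<tau>) *
        (\<Sum>i\<in>idx m n. \<Sum>j\<in>idx m n. cnj (basis_tensor n B \<tau> i j) * basis_tensor n B \<sigma> i j))"
    by (simp add: sum_distrib_left sum.swap[of _ "idx m n" H] ac_simps)
  also have "\<dots> = (\<Sum>\<sigma>\<in>H. \<Sum>\<tau>\<in>H. if \<tau> = \<sigma> then a \<sigma> * cnj (a \<sigma>) * of_nat m ^ n else 0)"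
  proof (intro sum.cong refl)
    fix \<sigma> \<tau> assume "\<sigma> \<in> H" "\<tau> \<in> H"
    hence "\<sigma> \<in> idx (m\<^sup>2) n" "\<tau> \<in> idx (m\<^sup>2) n" using H by auto
    thus "a \<sigma> * cnj (a \<tau>) *
        (\<Sum>i\<in>idx m n. \<Sum>j\<in>idx m n. cnj (basis_tensor n B \<tau> i j) * basis_tensor n B \<sigma> i j)
      = (if \<tau> = \<sigma> then a \<sigma> * cnj (a \<sigma>) * of_nat m ^ n else 0)"
      by (simp add: BT_orth[OF B m])
  qed
  also have "\<dots> = (\<Sum>\<sigma>\<in>H. a \<sigma> * cnj (a \<sigma>) * of_nat m ^ n)"
    using finH by (simp add: sum.delta)
  also have "\<dots> = (\<Sum>\<sigma>\<in>H. complex_of_real (real m ^ n * (cmod (a \<sigma>))\<^sup>2))"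
    by (intro sum.cong refl) (simp only: of_real_mult cmod_sq_cnj, simp add: ac_simps)
  also have "\<dots> = complex_of_real (real m ^ n * (\<Sum>\<sigma>\<in>H. (cmod (a \<sigma>))\<^sup>2))"
    by (simp only: of_real_sum sum_distrib_left)
  finally show ?thesis by (simp only: of_real_eq_iff)
qed

lemma fcoeff_sum: "(\<Sum>i\<in>idx m n. \<Sum>j\<in>idx m n. cnj (basis_tensor n B \<sigma> i j) * X i j) = of_nat m ^ n * fcoeff m n B X \<sigma>"
  if "0 < m" using that by (simp add: fcoeff_def)

lemma fcoeff_sum': "(\<Sum>i\<in>idx m n. \<Sum>j\<in>idx m n. X i j * cnj (basis_tensor n B \<sigma> i j)) = of_nat m ^ n * fcoeff m n B X \<sigma>"
  if "0 < m" using that by (simp add: fcoeff_def mult.commute)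

lemma bessel:
  assumes B: "std_onb m B" and m: "0 < m" and H: "H \<subseteq> idx (m\<^sup>2) n"
  shows "real m ^ n * (\<Sum>\<sigma>\<in>H. (cmod (fcoeff m n B X \<sigma>))\<^sup>2) \<le> NN m n X"
proof -
  have finH: "finite H" using H finite_subset finite_idx by blast
  define c where "c \<sigma> = fcoeff m n B X \<sigma>" for \<sigma>
  define S where "S i j = (\<Sum>\<sigma>\<in>H. c \<sigma> * basis_tensor n B \<sigma> i j)" for i j
  define Q where "Q = (\<Sum>\<sigma>\<in>H. (cmod (c \<sigma>))\<^sup>2)"
  have NS: "NN m n S = real m ^ n * Q" unfolding S_def Q_def by (rule comb_norm[OF B m H])
  have cross: "(\<Sum>i\<in>idx m n. \<Sum>j\<in>idx m n. X i j * cnj (S i j)) = complex_of_real (real m ^ n * Q)"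
  proof -
    have "(\<Sum>i\<in>idx m n. \<Sum>j\<in>idx m n. X i j * cnj (S i j))
        = (\<Sum>\<sigma>\<in>H. cnj (c \<sigma>) * (\<Sum>i\<in>idx m n. \<Sum>j\<in>idx m n. X i j * cnj (basis_tensor n B \<sigma> i j)))"
      unfolding S_def by (simp add: sum_distrib_left sum.swap[of _ "idx m n" H] ac_simps)
    also have "\<dots> = (\<Sum>\<sigma>\<in>H. of_nat m ^ n * (cnj (c \<sigma>) * c \<sigma>))"
      unfolding c_def using m by (simp only: fcoeff_sum'[OF m]) (simp add: ac_simps)
    also have "\<dots> = complex_of_real (real m ^ n * Q)"
      unfolding Q_def by (simp only: of_real_mult of_real_sum cmod_sq_cnj sum_distrib_left) (simp add: ac_simps)
    finally show ?thesis .
  qed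
  have "0 \<le> (\<Sum>i\<in>idx m n. \<Sum>j\<in>idx m n. (cmod (X i j - S i j))\<^sup>2)" by (simp add: sum_nonneg)
  also have "\<dots> = NN m n X - 2 * Re (\<Sum>i\<in>idx m n. \<Sum>j\<in>idx m n. X i j * cnj (S i j)) + NN m n S"
    unfolding NN_def cmod_diff_sq by (simp add: sum.distrib sum_subtractf Re_sum sum_distrib_left)
  also have "\<dots> = NN m n X - real m ^ n * Q" unfolding cross NS by simp
  finally show ?thesis unfolding Q_def c_def by simp
qed

lemma norm2'_sq: "(norm2' m n X)\<^sup>2 = NN m n X / real m ^ n"
  unfolding norm2'_def NN_def by (simp add: sum_nonneg)

lemma high_bound:
  assumes B: "std_onb m B" and m: "0 < m" and g: "0 \<le> g"
    and hw: "\<And>\<sigma>. \<sigma> \<in> idx (m\<^sup>2) n \<Longrightarrow> d < real (weight \<sigma>) \<Longrightarrow> g ^ (2 * weight \<sigma>) \<le> \<delta>"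
    and d0: "0 \<le> \<delta>"
  shows "(norm2' m n (high_part m n B d (nz m g 0 n X)))\<^sup>2 \<le> \<delta> * (NN m n X / real m ^ n)"
proof -
  define H where "H = {\<sigma> \<in> idx (m\<^sup>2) n. d < real (weight \<sigma>)}"
  have H: "H \<subseteq> idx (m\<^sup>2) n" unfolding H_def by auto
  have hp: "high_part m n B d (nz m g 0 n X) = (\<lambda>i j. \<Sum>\<sigma>\<in>H. (of_real g ^ weight \<sigma> * fcoeff m n B X \<sigma>) * basis_tensor n B \<sigma> i j)"
    unfolding high_part_def H_def using B m by (auto simp: fcoeff_noise intro!: ext sum.cong)
  have mp: "0 < real m ^ n" using m by simp
  have "(norm2' m n (high_part m n B d (nz m g 0 n X)))\<^sup>2 = (\<Sum>\<sigma>\<in>H. (cmod (of_real g ^ weight \<sigma> * fcoeff m n B X \<sigma>))\<^sup>2)"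
    unfolding norm2'_sq hp comb_norm[OF B m H] using mp by simp
  also have "\<dots> = (\<Sum>\<sigma>\<in>H. g ^ (2 * weight \<sigma>) * (cmod (fcoeff m n B X \<sigma>))\<^sup>2)"
    using g by (simp add: norm_mult norm_power power_mult_distrib power_mult[symmetric] mult.commute[of 2])
  also have "\<dots> \<le> (\<Sum>\<sigma>\<in>H. \<delta> * (cmod (fcoeff m n B X \<sigma>))\<^sup>2)"
    by (intro sum_mono mult_right_mono) (auto simp: H_def hw)
  also have "\<dots> = \<delta> * (\<Sum>\<sigma>\<in>H. (cmod (fcoeff m n B X \<sigma>))\<^sup>2)" by (simp add: sum_distrib_left)
  also have "\<dots> \<le> \<delta> * (NN m n X / real m ^ n)"
    using bessel[OF B m H, of X] mp d0 by (intro mult_left_mono) (auto simp: pos_le_divide_eq ac_simps)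
  finally show ?thesis .
qed



lemma trace_ineq:
  fixes S :: "'a set" and P :: "'a \<Rightarrow> 'a \<Rightarrow> complex"
  assumes fin: "finite S" and b: "between01 S P"
  shows "(\<Sum>i\<in>S. \<Sum>j\<in>S. (cmod (P i j))\<^sup>2) \<le> real (card S)"
proof -
  define A where "A i j = id_on S i j - P i j" for i j
  define I where "I = id_on S"
  have pP: "psd_on S P" and pA: "psd_on S A" using b unfolding between01_def A_def by auto
  have hP: "\<And>i j. i \<in> S \<Longrightarrow> j \<in> S \<Longrightarrow> P i j = cnj (P j i)"
    using pP unfolding psd_on_def herm_on_def by blast
  have cI: "cnj (I i j) = I i j" for i j unfolding I_def id_on_def by simp
  have A': "A = (\<lambda>i j. I i j - P i j)" unfolding A_def I_def by (intro ext) simp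
  have int: "cnj (P i k) * A i j * P j k + cnj (A i k) * P i j * A j k
     = cnj (P i k) * I i j * P j k + I i k * P i j * I j k - I i k * P i j * P j k - cnj (P i k) * P i j * I j k"
    for i j k unfolding A' by (simp add: cI algebra_simps)
  have c1: "(\<Sum>j\<in>S. cnj (P i k) * I i j * P j k) = cnj (P i k) * P i k" if "i \<in> S" for i k
    using that fin by (simp add: I_def id_on_def if_distrib[of "\<lambda>x. _ * x"] if_distrib[of "\<lambda>x. x * _"] sum.delta cong: if_cong)
  have c4: "(\<Sum>j\<in>S. cnj (P i k) * P i j * I j k) = cnj (P i k) * P i k" if "k \<in> S" for i k
    using that fin by (simp add: I_def id_on_def if_distrib[of "\<lambda>x. _ * x"] sum.delta' cong: if_cong)
  have c2: "(\<Sum>i\<in>S. \<Sum>j\<in>S. I i k * P i j * I j k) = P k k" if "k \<in> S" for k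
    using that fin by (simp add: I_def id_on_def if_distrib[of "\<lambda>x. _ * x"] if_distrib[of "\<lambda>x. x * _"] sum.delta' cong: if_cong)
  have c3: "(\<Sum>i\<in>S. \<Sum>j\<in>S. I i k * P i j * P j k) = (\<Sum>j\<in>S. P k j * P j k)" if "k \<in> S" for k
    using that fin by (simp add: I_def id_on_def if_distrib[of "\<lambda>x. x * _"] sum.delta' cong: if_cong)
       (simp only: sum_if_const sum.delta fin, simp)
  define E1 where "E1 = (\<Sum>k\<in>S. qf S A (\<lambda>i. P i k))"
  define E2 where "E2 = (\<Sum>k\<in>S. qf S P (\<lambda>i. A i k))"
  have "E1 + E2 = (\<Sum>k\<in>S. \<Sum>i\<in>S. \<Sum>j\<in>S. cnj (P i k) * A i j * P j k + cnj (A i k) * P i j * A j k)"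
    unfolding E1_def E2_def qf_def by (simp add: sum.distrib)
  also have "\<dots> = (\<Sum>k\<in>S. (\<Sum>i\<in>S. \<Sum>j\<in>S. cnj (P i k) * I i j * P j k) + (\<Sum>i\<in>S. \<Sum>j\<in>S. I i k * P i j * I j k)
      - (\<Sum>i\<in>S. \<Sum>j\<in>S. I i k * P i j * P j k) - (\<Sum>i\<in>S. \<Sum>j\<in>S. cnj (P i k) * P i j * I j k))"
    unfolding int by (simp add: sum.distrib sum_subtractf)
  also have "\<dots> = (\<Sum>k\<in>S. P k k - (\<Sum>j\<in>S. P k j * P j k))"
    by (intro sum.cong refl) (simp add: c1 c2 c3 c4)
  also have "\<dots> = (\<Sum>k\<in>S. P k k - (\<Sum>j\<in>S. complex_of_real ((cmod (P k j))\<^sup>2)))"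
  proof (intro sum.cong refl arg_cong2[where f="(-)"])
    fix k j assume kj: "k \<in> S" "j \<in> S"
    have "P j k = cnj (P k j)" by (rule hP[OF kj(2) kj(1)])
    thus "P k j * P j k = complex_of_real ((cmod (P k j))\<^sup>2)" by (simp only: cmod_sq_cnj)
  qed
  also have "\<dots> = (\<Sum>k\<in>S. P k k) - (\<Sum>k\<in>S. \<Sum>j\<in>S. complex_of_real ((cmod (P k j))\<^sup>2))"
    by (simp only: sum_subtractf)
  finally have e: "E1 + E2 = (\<Sum>k\<in>S. P k k) - (\<Sum>k\<in>S. \<Sum>j\<in>S. complex_of_real ((cmod (P k j))\<^sup>2))" .
  have r1: "0 \<le> Re E1" unfolding E1_def Re_sum using pA by (intro sum_nonneg) (simp add: psd_on_qf)
  have r2: "0 \<le> Re E2" unfolding E2_def Re_sum using pP by (intro sum_nonneg) (simp add: psd_on_qf)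
  have dk: "Re (P k k) \<le> 1" if k: "k \<in> S" for k
  proof -
    have "0 \<le> Re (qf S A (\<lambda>i. I i k))" using pA by (simp add: psd_on_qf)
    also have "qf S A (\<lambda>i. I i k) = A k k"
      unfolding qf_def using k fin
      by (simp add: I_def id_on_def if_distrib[of cnj] if_distrib[of "\<lambda>x. x * _"] if_distrib[of "\<lambda>x. _ * x"] sum.delta' cong: if_cong)
    finally show ?thesis using k by (simp add: A_def id_on_def)
  qed
  have "(\<Sum>k\<in>S. \<Sum>j\<in>S. (cmod (P k j))\<^sup>2) = Re (\<Sum>k\<in>S. P k k) - Re (E1 + E2)"
    unfolding e by (simp add: Re_sum)
  also have "\<dots> \<le> Re (\<Sum>k\<in>S. P k k)" using r1 r2 by simp
  also have "\<dots> \<le> (\<Sum>k\<in>S. 1)" unfolding Re_sum by (intro sum_mono dk)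
  finally show ?thesis by simp
qed

lemma NN_le:
  assumes "between01 (idx m n) P"
  shows "NN m n P \<le> real m ^ n"
  using trace_ineq[OF finite_idx assms] by (simp add: NN_def card_idx)


lemma entry_le:
  assumes m: "0 < m" and nP: "(1 / real m) * (\<Sum>i<m. \<Sum>j<m. (cmod (P i j))\<^sup>2) = 1"
    and ij: "i < m" "j < m"
  shows "cmod (P i j) \<le> sqrt (real m)"
proof -
  have s: "(\<Sum>i<m. \<Sum>j<m. (cmod (P i j))\<^sup>2) = real m" using nP m by (simp add: field_simps)
  have "(cmod (P i j))\<^sup>2 \<le> (\<Sum>j<m. (cmod (P i j))\<^sup>2)"
    using ij by (intro member_le_sum) auto
  also have "\<dots> \<le> (\<Sum>i<m. \<Sum>j<m. (cmod (P i j))\<^sup>2)"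
    using ij by (intro member_le_sum[of i "{..<m}" "\<lambda>i. \<Sum>j<m. (cmod (P i j))\<^sup>2"]) (auto intro: sum_nonneg)
  finally show ?thesis using s by (simp add: real_le_rsqrt)
qed

lemma maxcorr_ge:
  assumes m: "0 < m" and P: "ext_on {..<m} P" and Q: "ext_on {..<m} Q"
    and tP: "(\<Sum>i<m. P i i) = 0" and tQ: "(\<Sum>i<m. Q i i) = 0"
    and nP: "(1 / real m) * (\<Sum>i<m. \<Sum>j<m. (cmod (P i j))\<^sup>2) = 1"
    and nQ: "(1 / real m) * (\<Sum>i<m. \<Sum>j<m. (cmod (Q i j))\<^sup>2) = 1"
  shows "cmod (corr1 m \<psi> P Q) \<le> maxcorr m \<psi>"
proof -
  define K where "K = (\<Sum>a<m. \<Sum>a'<m. \<Sum>b<m. \<Sum>b'<m. real m * cmod (\<psi> (a', b') (a, b)))"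
  define T where "T = {cmod (corr1 m \<psi> P Q) | P Q.
      ext_on {..<m} P \<and> ext_on {..<m} Q \<and>
      (\<Sum>i<m. P i i) = 0 \<and> (\<Sum>i<m. Q i i) = 0 \<and>
      (1 / real m) * (\<Sum>i<m. \<Sum>j<m. (cmod (P i j))\<^sup>2) = 1 \<and>
      (1 / real m) * (\<Sum>i<m. \<Sum>j<m. (cmod (Q i j))\<^sup>2) = 1}"
  have bd: "cmod (corr1 m \<psi> P' Q') \<le> K"
    if nP': "(1 / real m) * (\<Sum>i<m. \<Sum>j<m. (cmod (P' i j))\<^sup>2) = 1"
    and nQ': "(1 / real m) * (\<Sum>i<m. \<Sum>j<m. (cmod (Q' i j))\<^sup>2) = 1" for P' Q'
  proof -
    have "cmod (corr1 m \<psi> P' Q') \<le> (\<Sum>a<m. \<Sum>a'<m. \<Sum>b<m. \<Sum>b'<m. cmod (cnj (P' a' a) * Q' b b' * \<psi> (a', b') (a, b)))"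
      unfolding corr1_def by (rule order_trans[OF norm_sum sum_mono], rule order_trans[OF norm_sum sum_mono],
          rule order_trans[OF norm_sum sum_mono], rule norm_sum)
    also have "\<dots> \<le> K" unfolding K_def
    proof (intro sum_mono)
      fix a a' b b' assume "a \<in> {..<m}" "a' \<in> {..<m}" "b \<in> {..<m}" "b' \<in> {..<m}"
      hence "cmod (P' a' a) \<le> sqrt (real m)" "cmod (Q' b b') \<le> sqrt (real m)"
        using entry_le[OF m nP'] entry_le[OF m nQ'] by auto
      hence "cmod (P' a' a) * cmod (Q' b b') \<le> sqrt (real m) * sqrt (real m)"
        by (intro mult_mono) auto
      hence "cmod (P' a' a) * cmod (Q' b b') \<le> real m" by simp
      thus "cmod (cnj (P' a' a) * Q' b b' * \<psi> (a', b') (a, b)) \<le> real m * cmod (\<psi> (a', b') (a, b))"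
        by (simp add: norm_mult mult_right_mono)
    qed
    finally show ?thesis .
  qed
  have "bdd_above T" unfolding T_def bdd_above_def using bd by blast
  moreover have "cmod (corr1 m \<psi> P Q) \<in> T" unfolding T_def using assms by blast
  ultimately show ?thesis unfolding maxcorr_def T_def[symmetric] by (simp add: cSup_upper)
qed

lemma sbound_maxcorr:
  assumes m: "0 < m" and r0: "0 \<le> maxcorr m \<psi>"
  shows "sbound m \<psi> (maxcorr m \<psi>)"
  unfolding sbound_def
proof (intro allI impI)
  fix u w :: "nat \<Rightarrow> nat \<Rightarrow> complex"
  assume tu: "(\<Sum>a<m. u a a) = 0" and tw: "(\<Sum>b<m. w b b) = 0"
  define \<rho> where "\<rho> = maxcorr m \<psi>"
  define V where "V = (\<Sum>a<m. \<Sum>a'<m. \<Sum>b<m. \<Sum>b'<m. u a a' * w b b' * \<psi> (a',b') (a,b))"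
  have e1: "(\<Sum>a<m. \<Sum>a'<m. \<Sum>b<m. \<Sum>b'<m. psip m \<psi> (a',b') (a,b) * u a a' * w b b') = V"
  proof -
    have "(\<Sum>a<m. \<Sum>a'<m. \<Sum>b<m. \<Sum>b'<m. psip m \<psi> (a',b') (a,b) * u a a' * w b b')
        = V - (\<Sum>a<m. \<Sum>a'<m. \<Sum>b<m. \<Sum>b'<m. u a a' * (w b b' * (if a' = a \<and> b' = b then 1 / (of_nat m)\<^sup>2 else 0)))"
      unfolding V_def psip_def by (simp add: algebra_simps sum_subtractf)
    also have "(\<Sum>a<m. \<Sum>a'<m. \<Sum>b<m. \<Sum>b'<m. u a a' * (w b b' * (if a' = a \<and> b' = b then 1 / (of_nat m)\<^sup>2 else 0)))
       = (\<Sum>a<m. \<Sum>a'<m. \<Sum>b<m. \<Sum>b'<m. (if a' = a then (if b' = b then u a a' * w b b' / (of_nat m)\<^sup>2 else 0) else 0))"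
      by (intro sum.cong refl) auto
    also have "(\<Sum>a<m. \<Sum>a'<m. \<Sum>b<m. \<Sum>b'<m. (if a' = a then (if b' = b then u a a' * w b b' / (of_nat m)\<^sup>2 else 0) else 0))
        = (\<Sum>a<m. \<Sum>b<m. u a a * w b b / (of_nat m)\<^sup>2)"
      by (simp only: sum_if_const sum.delta finite_lessThan) (auto intro!: sum.cong)
    also have "\<dots> = (\<Sum>a<m. u a a) * (\<Sum>b<m. w b b) / (of_nat m)\<^sup>2"
      by (simp add: sum_product sum_divide_distrib)
    finally show ?thesis using tu by simp
  qed
  show "cmod (\<Sum>a<m. \<Sum>a'<m. \<Sum>b<m. \<Sum>b'<m. psip m \<psi> (a',b') (a,b) * u a a' * w b b')
       \<le> maxcorr m \<psi> / real m * sqrt (N1 m u) * sqrt (N1 m w)"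
  proof (cases "N1 m u = 0 \<or> N1 m w = 0")
    case True
    have z: "V = 0"
    proof (cases "N1 m u = 0")
      case True
      have "\<forall>a\<in>{..<m}. \<forall>a'\<in>{..<m}. (cmod (u a a'))\<^sup>2 = 0"
        using True unfolding N1_def by (simp add: sum_nonneg_eq_0_iff sum_nonneg)
      hence "u a a' = 0" if "a < m" "a' < m" for a a' using that by simp
      thus ?thesis unfolding V_def by simp
    next
      case False
      hence Tw: "N1 m w = 0" using True by simp
      have "\<forall>a\<in>{..<m}. \<forall>a'\<in>{..<m}. (cmod (w a a'))\<^sup>2 = 0"
        using Tw unfolding N1_def by (simp add: sum_nonneg_eq_0_iff sum_nonneg)
      hence "w a a' = 0" if "a < m" "a' < m" for a a' using that by simp
      thus ?thesis unfolding V_def by simp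
    qed
    show ?thesis unfolding e1 z using r0 by (simp add: N1_def sum_nonneg)
  next
    case False
    have Nu: "0 < N1 m u" and Nw: "0 < N1 m w"
      using False unfolding N1_def by (auto intro!: order.not_eq_order_implies_strict sum_nonneg)
    define su where "su = sqrt (real m / N1 m u)"
    define sw where "sw = sqrt (real m / N1 m w)"
    have su0: "0 < su" "0 < sw" unfolding su_def sw_def using Nu Nw m by auto
    define P where "P i j = (if i < m \<and> j < m then of_real su * cnj (u j i) else 0)" for i j
    define Q where "Q i j = (if i < m \<and> j < m then of_real sw * w i j else 0)" for i j
    have eP: "ext_on {..<m} P" "ext_on {..<m} Q" unfolding ext_on_def P_def Q_def by auto
    have tP: "(\<Sum>i<m. P i i) = 0" unfolding P_def using tu
      by (simp add: sum_distrib_left[symmetric] flip: cnj_sum)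
    have tQ: "(\<Sum>i<m. Q i i) = 0" unfolding Q_def using tw
      by (simp add: sum_distrib_left[symmetric])
    have nP: "(1 / real m) * (\<Sum>i<m. \<Sum>j<m. (cmod (P i j))\<^sup>2) = 1"
    proof -
      have "(\<Sum>i<m. \<Sum>j<m. (cmod (P i j))\<^sup>2) = su\<^sup>2 * (\<Sum>i<m. \<Sum>j<m. (cmod (u j i))\<^sup>2)"
        unfolding P_def using su0 by (simp add: norm_mult power_mult_distrib sum_distrib_left)
      also have "(\<Sum>i<m. \<Sum>j<m. (cmod (u j i))\<^sup>2) = N1 m u" unfolding N1_def by (rule sum.swap)
      also have "su\<^sup>2 = real m / N1 m u" unfolding su_def using Nu m by simp
      finally show ?thesis using Nu m by simp
    qed
    have nQ: "(1 / real m) * (\<Sum>i<m. \<Sum>j<m. (cmod (Q i j))\<^sup>2) = 1"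
    proof -
      have "(\<Sum>i<m. \<Sum>j<m. (cmod (Q i j))\<^sup>2) = sw\<^sup>2 * N1 m w"
        unfolding Q_def N1_def using su0 by (simp add: norm_mult power_mult_distrib sum_distrib_left)
      also have "sw\<^sup>2 = real m / N1 m w" unfolding sw_def using Nw m by simp
      finally show ?thesis using Nw m by simp
    qed
    have c: "corr1 m \<psi> P Q = of_real (su * sw) * V"
      unfolding corr1_def P_def Q_def V_def by (simp add: sum_distrib_left ac_simps)
    have "su * sw * cmod V \<le> \<rho>"
      using maxcorr_ge[OF m eP tP tQ nP nQ, of \<psi>] su0 unfolding c \<rho>_def by (simp add: norm_mult)
    hence "cmod V \<le> \<rho> / (su * sw)" using su0 by (simp add: field_simps)
    also have "\<rho> / (su * sw) = \<rho> / real m * sqrt (N1 m u) * sqrt (N1 m w)"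
      unfolding su_def sw_def using Nu Nw m
      by (simp add: real_sqrt_divide field_simps)
    finally show ?thesis unfolding e1 \<rho>_def .
  qed
qed



lemma exp_mL: "0 < (\<delta>::real) \<Longrightarrow> exp (- ln (1 / \<delta>)) = \<delta>"
  by (simp add: ln_div)

lemma L_ge: "0 < (\<delta>::real) \<Longrightarrow> 1 - \<delta> \<le> ln (1 / \<delta>)"
  using ln_le_minus_one[of \<delta>] by (simp add: ln_div)

lemma pow_le_exp: "0 \<le> \<rho> \<Longrightarrow> \<rho> ^ k \<le> exp (- (real k * (1 - \<rho>)))"
proof -
  assume r: "0 \<le> \<rho>"
  have "\<rho> \<le> exp (\<rho> - 1)" using exp_ge_add_one_self[of "\<rho> - 1"] by simp
  hence "\<rho> ^ k \<le> exp (\<rho> - 1) ^ k" using r by (intro power_mono) auto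
  also have "\<dots> = exp (- (real k * (1 - \<rho>)))" by (simp add: exp_of_nat_mult[symmetric] algebra_simps)
  finally show ?thesis .
qed

lemma F1_lemma:
  fixes \<rho> \<delta> L t :: real
  assumes r: "0 \<le> \<rho>" "\<rho> < 1" and d: "0 < \<delta>" "\<delta> < 1"
    and L: "L = ln (1 / \<delta>)" and t: "t = \<delta> * (1 - \<rho>) / L" and Lp: "0 < L" and t1: "t \<le> 1" and t0: "0 \<le> t"
  shows "\<bar>(1 - t) ^ k - 1\<bar> * \<rho> ^ k \<le> \<delta>"
proof -
  have p1: "(1 - t) ^ k \<le> 1" using t1 t0 power_le_one[of "1 - t" k] by auto
  have p0: "0 \<le> (1 - t) ^ k" using t1 by simp
  have a: "0 \<le> 1 - (1 - t) ^ k" "1 - (1 - t) ^ k \<le> 1" using p0 p1 by auto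
  have ab: "\<bar>(1 - t) ^ k - 1\<bar> = 1 - (1 - t) ^ k" using a by simp
  show ?thesis
  proof (cases "L \<le> real k * (1 - \<rho>)")
    case True
    have "\<rho> ^ k \<le> exp (- (real k * (1 - \<rho>)))" by (rule pow_le_exp[OF r(1)])
    also have "\<dots> \<le> exp (- L)" using True by simp
    also have "\<dots> = \<delta>" using L d exp_mL by simp
    finally have "\<rho> ^ k \<le> \<delta>" .
    moreover have "0 \<le> \<rho> ^ k" using r by simp
    ultimately show ?thesis unfolding ab using a by (metis mult_le_cancel_right1 order_trans mult_left_le_one_le)
  next
    case False
    have "1 + real k * (- t) \<le> (1 + - t) ^ k" using t1 by (intro Bernoulli_inequality) simp
    hence "1 - (1 - t) ^ k \<le> real k * t" by simp
    also have "\<dots> \<le> L / (1 - \<rho>) * t" using False r t0 by (intro mult_right_mono) (auto simp: field_simps)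
    also have "\<dots> = \<delta>" using t Lp r by (simp add: field_simps)
    finally have b: "1 - (1 - t) ^ k \<le> \<delta>" .
    have "\<rho> ^ k \<le> 1" using r by (simp add: power_le_one)
    thus ?thesis unfolding ab using a b r by (metis mult_right_le_one_le order_trans zero_le_power)
  qed
qed

lemma F2_lemma:
  fixes \<rho> \<delta> L t :: real
  assumes r: "0 \<le> \<rho>" "\<rho> < 1" and d: "0 < \<delta>" "\<delta> < 1"
    and L: "L = ln (1 / \<delta>)" and t: "t = \<delta> * (1 - \<rho>) / L" and Lp: "0 < L" and t1: "t \<le> 1" and t0: "0 \<le> t"
    and w: "2 * L\<^sup>2 / (1 * (1 - \<rho>) * \<delta>) < real w"
  shows "(1 - t) ^ w \<le> \<delta>"
proof -
  have "(1 - t) ^ w \<le> exp (- t) ^ w" using t1 exp_ge_add_one_self[of "- t"] by (intro power_mono) auto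
  also have "\<dots> = exp (- (t * real w))" by (simp add: exp_of_nat_mult[symmetric] algebra_simps)
  also have "\<dots> \<le> exp (- L)"
  proof -
    have e: "t * (2 * L\<^sup>2 / (1 * (1 - \<rho>) * \<delta>)) = 2 * L" unfolding t using Lp r d by (simp add: field_simps power2_eq_square)
    have l: "t * (2 * L\<^sup>2 / (1 * (1 - \<rho>) * \<delta>)) \<le> t * real w" using w t0 by (intro mult_left_mono) auto
    have "2 * L \<le> t * real w" using e l by simp
    hence "L \<le> t * real w" using Lp by linarith
    thus ?thesis by simp
  qed
  also have "\<dots> = \<delta>" using L d exp_mL by simp
  finally show ?thesis .
qed


lemma norm2'_NN: "norm2' m n X = sqrt (1 / real m ^ n * NN m n X)"
  by (simp add: norm2'_def NN_def)

lemma nz_idm: "(\<lambda>i j. id_on (idx m n) i j - nz m g 0 n P i j) = nz m g 0 n (\<lambda>i j. id_on (idx m n) i j - P i j)"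
  if "0 < m"
proof -
  have "nz m g 0 n (\<lambda>i j. id_on (idx m n) i j - P i j) = nz m g 0 n (\<lambda>i j. (-1) * P i j + id_on (idx m n) i j)"
    by simp
  also have "\<dots> = (\<lambda>i j. (-1) * nz m g 0 n P i j + nz m g 0 n (id_on (idx m n)) i j)"
    by (rule nz_lin)
  also have "\<dots> = (\<lambda>i j. id_on (idx m n) i j - nz m g 0 n P i j)"
    using nz_unital[of 0 n n m g] that by simp
  finally show ?thesis by simp
qed

lemma choose_g:
  fixes \<rho> \<delta> :: real
  assumes r: "0 \<le> \<rho>" "\<rho> < 1" and d: "0 < \<delta>" "\<delta> < 1"
  shows "\<exists>g. 0 \<le> g \<and> g \<le> 1 \<and> (\<forall>k. \<bar>g ^ (2 * k) - 1\<bar> * \<rho> ^ k \<le> \<delta>) \<and>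
    (\<forall>w. 2 * (ln (1 / \<delta>))\<^sup>2 / (1 * (1 - \<rho>) * \<delta>) < real w \<longrightarrow> g ^ (2 * w) \<le> \<delta>)"
proof -
  define L where "L = ln (1 / \<delta>)"
  have Lp: "0 < L" unfolding L_def using d by simp
  show ?thesis
  proof (cases "\<rho> \<le> \<delta>")
    case True
    have F1: "\<bar>0 ^ (2 * k) - 1\<bar> * \<rho> ^ k \<le> \<delta>" for k :: nat
    proof (cases k)
      case 0 then show ?thesis using d by simp
    next
      case (Suc k')
      have "\<rho> ^ k \<le> \<rho>" using r Suc by (simp add: power_le_one mult_left_le)
      then show ?thesis using Suc True by simp
    qed
    have F2: "(0::real) ^ (2 * w) \<le> \<delta>" if "2 * (ln (1 / \<delta>))\<^sup>2 / (1 * (1 - \<rho>) * \<delta>) < real w" for w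
    proof -
      have "0 \<le> 2 * (ln (1 / \<delta>))\<^sup>2 / (1 * (1 - \<rho>) * \<delta>)" using r d by simp
      hence "0 < w" using that by linarith
      hence "(0::real) ^ (2 * w) = 0" by (simp add: zero_power)
      thus ?thesis using d by linarith
    qed
    show ?thesis
    proof (intro exI[of _ "0::real"] conjI allI impI)
      fix k :: nat show "\<bar>0 ^ (2 * k) - 1\<bar> * \<rho> ^ k \<le> \<delta>" by (rule F1)
    next
      fix w :: nat assume "2 * (ln (1 / \<delta>))\<^sup>2 / (1 * (1 - \<rho>) * \<delta>) < real w"
      thus "(0::real) ^ (2 * w) \<le> \<delta>" by (rule F2)
    qed auto
  next
    case False
    define t where "t = \<delta> * (1 - \<rho>) / L"
    have t0: "0 \<le> t" unfolding t_def using d r Lp by simp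
    have "1 - \<rho> \<le> L" unfolding L_def using L_ge[OF d(1)] False by simp
    hence q: "(1 - \<rho>) / L \<le> 1" using Lp by simp
    have t1: "t \<le> 1" unfolding t_def using q d r Lp
      by (metis mult_le_one order_less_imp_le times_divide_eq_right divide_nonneg_pos diff_ge_0_iff_ge)
    define g where "g = sqrt (1 - t)"
    have gk: "g ^ (2 * k) = (1 - t) ^ k" for k unfolding g_def using t1 by (simp add: power_mult)
    show ?thesis
    proof (intro exI[of _ g] conjI allI impI)
      show "0 \<le> g" unfolding g_def using t1 by simp
      show "g \<le> 1" unfolding g_def using t0 t1 by simp
      fix k show "\<bar>g ^ (2 * k) - 1\<bar> * \<rho> ^ k \<le> \<delta>"
        unfolding gk using F1_lemma[OF r d L_def t_def Lp t1 t0] .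
    next
      fix w assume "2 * (ln (1 / \<delta>))\<^sup>2 / (1 * (1 - \<rho>) * \<delta>) < real w"
      thus "g ^ (2 * w) \<le> \<delta>" unfolding gk using F2_lemma[OF r d L_def t_def Lp t1 t0] L_def by simp
    qed
  qed
qed

theorem lemma6p1:
  shows "\<exists>C>0. \<forall>(\<rho>::real) (\<delta>::real) (n::nat) (m::nat) \<psi>.
    0 \<le> \<rho> \<longrightarrow> \<rho> < 1 \<longrightarrow> 0 < \<delta> \<longrightarrow> \<delta> < 1 \<longrightarrow> 0 < n \<longrightarrow> 1 < m \<longrightarrow>
    nme_state m \<psi> \<longrightarrow> maxcorr m \<psi> = \<rho> \<longrightarrow>
    (let d = 2 * (ln (1 / \<delta>))\<^sup>2 / (C * (1 - \<rho>) * \<delta>) in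
     \<exists>f. linear_unital m n f \<and>
       (\<forall>P Q. between01 (idx m n) P \<longrightarrow> between01 (idx m n) Q \<longrightarrow>
          between01 (idx m n) (f P) \<and> between01 (idx m n) (f Q) \<and>
          norm2' m n (f P) \<le> norm2' m n P \<and> norm2' m n (f Q) \<le> norm2' m n Q \<and>
          cmod (corr m n \<psi> (f P) (f Q) - corr m n \<psi> P Q) \<le> \<delta> \<and>
          (\<forall>B. std_onb m B \<longrightarrow>
             (norm2' m n (high_part m n B d (f P)))\<^sup>2 \<le> \<delta> \<and>
             (norm2' m n (high_part m n B d (f Q)))\<^sup>2 \<le> \<delta>)))"
proof (intro exI[of _ "1::real"] conjI allI impI)
  show "(0::real) < 1" by simp
next
  fix \<rho> \<delta> :: real and n m :: nat and \<psi>
  assume r0: "0 \<le> \<rho>" and r1: "\<rho> < 1" and d0: "0 < \<delta>" and d1: "\<delta> < 1" and n0: "0 < n"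
    and m1: "1 < m" and nme: "nme_state m \<psi>" and mc: "maxcorr m \<psi> = \<rho>"
  define d where "d = 2 * (ln (1 / \<delta>))\<^sup>2 / (1 * (1 - \<rho>) * \<delta>)"
  have m0: "0 < m" using m1 by simp
  have mg: "margs m \<psi>" using nme unfolding nme_state_def margs_def by blast
  have sb: "sbound m \<psi> \<rho>" using sbound_maxcorr[OF m0, of \<psi>] mc r0 by simp
  obtain g where g0: "0 \<le> g" and g1: "g \<le> 1" and F1: "\<And>k. \<bar>g ^ (2 * k) - 1\<bar> * \<rho> ^ k \<le> \<delta>"
    and F2: "\<And>w. d < real w \<Longrightarrow> g ^ (2 * w) \<le> \<delta>"
    using choose_g[OF r0 r1 d0 d1] unfolding d_def by blast
  define f where "f = nz m g 0 n"
  have mp: "0 < real m ^ n" using m0 by simp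
  have lu: "linear_unital m n f"
    unfolding linear_unital_def
  proof (intro conjI allI impI)
    fix X assume "herm_on (idx m n) X"
    thus "herm_on (idx m n) (f X)" unfolding f_def by (rule nz_herm) simp
  next
    fix X Y :: op and a b :: real
    show "f (\<lambda>i j. of_real a * X i j + of_real b * Y i j) = (\<lambda>i j. of_real a * f X i j + of_real b * f Y i j)"
      unfolding f_def by (simp add: nz_lin nz_smul)
  next
    show "f (id_on (idx m n)) = id_on (idx m n)" unfolding f_def using m0 by (simp add: nz_unital)
  qed
  have b01: "between01 (idx m n) (f P)" if P: "between01 (idx m n) P" for P
    unfolding between01_def
  proof
    show "psd_on (idx m n) (f P)" unfolding f_def
      using P m0 g0 g1 by (intro nz_psd) (auto simp: between01_def)
    show "psd_on (idx m n) (\<lambda>i j. id_on (idx m n) i j - f P i j)" unfolding f_def nz_idm[OF m0]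
      using P m0 g0 g1 by (intro nz_psd) (auto simp: between01_def)
  qed
  have nrm: "norm2' m n (f P) \<le> norm2' m n P" for P
    unfolding norm2'_NN f_def using nz_NN[of 0 n n m g P] m0 g0 g1 mp
    by (intro real_sqrt_le_mono mult_left_mono) auto
  have crr: "cmod (corr m n \<psi> (f P) (f Q) - corr m n \<psi> P Q) \<le> \<delta>"
    if P: "between01 (idx m n) P" and Q: "between01 (idx m n) Q" for P Q
  proof -
    have ph: "Phi m \<psi> n (\<lambda>k. (-1) * 1 + g ^ (2 * k)) P Q = of_real (-1) * Phi m \<psi> n (\<lambda>_. 1) P Q + Phi m \<psi> n (\<lambda>k. g ^ (2 * k)) P Q"
      by (rule Phi_h)
    have "corr m n \<psi> (f P) (f Q) - corr m n \<psi> P Q = Phi m \<psi> n (\<lambda>k. (-1) * 1 + g ^ (2 * k)) P Q"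
      unfolding ph f_def corr_nz[OF mg m0] by (simp add: corr_Phi1[of m n \<psi> P Q])
    also have "cmod \<dots> \<le> \<delta> * sqrt (NN m n P) * sqrt (NN m n Q) / real m ^ n"
      using Phi_bound[OF sb r0 m0 mg, of "\<lambda>k. (-1) * 1 + g ^ (2 * k)" \<delta> n P Q] F1
      by (simp add: abs_minus_commute)
    also have "\<dots> \<le> \<delta> * sqrt (real m ^ n) * sqrt (real m ^ n) / real m ^ n"
      using NN_le[OF P] NN_le[OF Q] d0 mp
      by (intro divide_right_mono mult_mono mult_left_mono real_sqrt_le_mono) (auto simp: NN_nonneg)
    also have "\<dots> = \<delta> * (sqrt (real m ^ n) * sqrt (real m ^ n)) / real m ^ n" by (simp only: mult.assoc)
    also have "\<dots> = \<delta>" using mp by (simp only: real_sqrt_mult_self abs_of_pos) simp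
    finally show ?thesis .
  qed
  have hi: "(norm2' m n (high_part m n B d (f P)))\<^sup>2 \<le> \<delta>"
    if B: "std_onb m B" and P: "between01 (idx m n) P" for B P
  proof -
    have "(norm2' m n (high_part m n B d (f P)))\<^sup>2 \<le> \<delta> * (NN m n P / real m ^ n)"
      unfolding f_def using F2 d0 by (intro high_bound[OF B m0 g0]) auto
    also have "\<dots> \<le> \<delta> * 1"
      using NN_le[OF P] mp d0 by (intro mult_left_mono) (auto simp: divide_le_eq)
    finally show ?thesis by simp
  qed
  show "let d = 2 * (ln (1 / \<delta>))\<^sup>2 / (1 * (1 - \<rho>) * \<delta>) in
     \<exists>f. linear_unital m n f \<and>
       (\<forall>P Q. between01 (idx m n) P \<longrightarrow> between01 (idx m n) Q \<longrightarrow>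
          between01 (idx m n) (f P) \<and> between01 (idx m n) (f Q) \<and>
          norm2' m n (f P) \<le> norm2' m n P \<and> norm2' m n (f Q) \<le> norm2' m n Q \<and>
          cmod (corr m n \<psi> (f P) (f Q) - corr m n \<psi> P Q) \<le> \<delta> \<and>
          (\<forall>B. std_onb m B \<longrightarrow>
             (norm2' m n (high_part m n B d (f P)))\<^sup>2 \<le> \<delta> \<and>
             (norm2' m n (high_part m n B d (f Q)))\<^sup>2 \<le> \<delta>))"
    unfolding Let_def d_def[symmetric]
    using lu b01 nrm crr hi by blast
qed


end
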